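(* Let $(n_k,f^{(k)})_{k\ge1}$ be a sequence with $n_k\to\infty$, $f^{(k)}\in\mathcal K$, $\rho(f^{(k)})\to1$ and $\rho(f^{(k)})\ne1$; write $n=n_k$, $\rho=\rho(f^{(k)})$ and evaluate $u,v$ and the law of the process at $f^{(k)}$. Then for all $m,l\in\{1,\dots,d\}$, $$\frac{E(Y_{n,l}\mid Z_0=e_m)}{\frac{1-\rho^{n+1}}{1-\rho}u_mv_l}\to1\qquad(k\to\infty).$$
   Context: Fix $d\ge1$, $X=\mathbb Z_{\ge0}^d$, $C=[0,1]^d$; $s^\alpha=\prod_is_i^{\alpha_i}$. A $d$-type Galton–Watson process $(Z_n)_{n\ge0}$ in $X$ has offspring p.g.f. $f=(f_1,\dots,f_d)'$, $f_k(s)=\sum_{i\in X}p_k(i)s^i$; $Y_n=\sum_{j=0}^nZ_j=(Y_{n,1},\dots,Y_{n,d})'$ is the total progeny. $M=(\partial f_k(\mathbf 1)/\partial s_l)_{k,l}$, $b^k_{lm},c^k_{lmj}$ the second and third partial derivatives of $f_k$ at $\mathbf 1$. For fixed $a,b,c>0$, $U\in\mathbb N$, $\mathcal K=\mathcal K(a,b,c,U)$ is the class of such $f$ with $[M^U]_{kl}\ge a$ for all $k,l$, $\sum b^k_{lm}\ge b$, $\sum c^k_{lmj}\le c$. $\rho$ is the Perron root of $M$, $u,v$ its right and left (column) eigenvectors normalized by $\sum_ku_k=1$, $\sum_ku_kv_k=1$. *)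

theory Defs
  imports "HOL-Probability.Probability"
begin

text \<open>Types are indexed by 0..d-1 (the paper's 1..d shifted). A population vector is a
function nat => nat; only coordinates below d are meaningful.
An offspring law is p :: nat => (nat => nat) pmf, p k the offspring distribution of a
type-k individual (equivalently the p.g.f. f_k).\<close>

definition unitv :: "nat \<Rightarrow> nat \<Rightarrow> nat" where
  "unitv m = (\<lambda>i. if i = m then 1 else 0)"

definition offspring_law :: "nat \<Rightarrow> (nat \<Rightarrow> (nat \<Rightarrow> nat) pmf) \<Rightarrow> bool" where
  "offspring_law d p \<longleftrightarrow> (\<forall>k<d. \<forall>x\<in>set_pmf (p k). \<forall>i\<ge>d. x i = 0)"

text \<open>Mean matrix M_{kl} = df_k/ds_l (1) = E(offspring of type l of a type-k parent).\<close>
definition mean_mat :: "(nat \<Rightarrow> (nat \<Rightarrow> nat) pmf) \<Rightarrow> nat \<Rightarrow> nat \<Rightarrow> real" where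
  "mean_mat p k l = measure_pmf.expectation (p k) (\<lambda>x. real (x l))"

text \<open>Second and third partial derivatives of f_k at 1 (factorial moments), valued in
[0,\<infinity>].\<close>
definition deriv2 :: "(nat \<Rightarrow> (nat \<Rightarrow> nat) pmf) \<Rightarrow> nat \<Rightarrow> nat \<Rightarrow> nat \<Rightarrow> ennreal" where
  "deriv2 p k l m = (\<integral>\<^sup>+ x. ennreal (real (x l * (x m - (if l = m then 1 else 0)))) \<partial>measure_pmf (p k))"

definition deriv3 :: "(nat \<Rightarrow> (nat \<Rightarrow> nat) pmf) \<Rightarrow> nat \<Rightarrow> nat \<Rightarrow> nat \<Rightarrow> nat \<Rightarrow> ennreal" where
  "deriv3 p k l m j = (\<integral>\<^sup>+ x. ennreal (real (x l * (x m - (if l = m then 1 else 0))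
       * (x j - (if l = j then 1 else 0) - (if m = j then 1 else 0)))) \<partial>measure_pmf (p k))"

definition matmul :: "nat \<Rightarrow> (nat \<Rightarrow> nat \<Rightarrow> real) \<Rightarrow> (nat \<Rightarrow> nat \<Rightarrow> real) \<Rightarrow> nat \<Rightarrow> nat \<Rightarrow> real" where
  "matmul d A B = (\<lambda>i j. \<Sum>r<d. A i r * B r j)"

fun matpow :: "nat \<Rightarrow> (nat \<Rightarrow> nat \<Rightarrow> real) \<Rightarrow> nat \<Rightarrow> nat \<Rightarrow> nat \<Rightarrow> real" where
  "matpow d A 0 = (\<lambda>i j. if i = j then 1 else 0)"
| "matpow d A (Suc n) = matmul d (matpow d A n) A"

definition classK :: "nat \<Rightarrow> real \<Rightarrow> real \<Rightarrow> real \<Rightarrow> nat \<Rightarrow> (nat \<Rightarrow> (nat \<Rightarrow> nat) pmf) \<Rightarrow> bool" where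
  "classK d a b c U p \<longleftrightarrow> offspring_law d p
     \<and> (\<forall>k<d. \<forall>l<d. matpow d (mean_mat p) U k l \<ge> a)
     \<and> (\<Sum>k<d. \<Sum>l<d. \<Sum>m<d. deriv2 p k l m) \<ge> ennreal b
     \<and> (\<Sum>k<d. \<Sum>l<d. \<Sum>m<d. \<Sum>j<d. deriv3 p k l m j) \<le> ennreal c"

definition is_eigenvalue :: "nat \<Rightarrow> (nat \<Rightarrow> nat \<Rightarrow> real) \<Rightarrow> complex \<Rightarrow> bool" where
  "is_eigenvalue d A mu \<longleftrightarrow> (\<exists>x :: nat \<Rightarrow> complex. (\<exists>i<d. x i \<noteq> 0) \<and>
      (\<forall>i<d. (\<Sum>j<d. complex_of_real (A i j) * x j) = mu * x i))"

definition perron_root :: "nat \<Rightarrow> (nat \<Rightarrow> nat \<Rightarrow> real) \<Rightarrow> real" where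
  "perron_root d A = Max {cmod mu | mu. is_eigenvalue d A mu}"

fun iid_sum :: "(nat \<Rightarrow> nat) pmf \<Rightarrow> nat \<Rightarrow> (nat \<Rightarrow> nat) pmf" where
  "iid_sum q 0 = return_pmf (\<lambda>_. 0)"
| "iid_sum q (Suc n) = bind_pmf q (\<lambda>x. map_pmf (\<lambda>y i. x i + y i) (iid_sum q n))"

fun gw_step_upto :: "(nat \<Rightarrow> (nat \<Rightarrow> nat) pmf) \<Rightarrow> (nat \<Rightarrow> nat) \<Rightarrow> nat \<Rightarrow> (nat \<Rightarrow> nat) pmf" where
  "gw_step_upto p z 0 = return_pmf (\<lambda>_. 0)"
| "gw_step_upto p z (Suc k) =
     bind_pmf (iid_sum (p k) (z k)) (\<lambda>x. map_pmf (\<lambda>y i. x i + y i) (gw_step_upto p z k))"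

definition gw_step :: "nat \<Rightarrow> (nat \<Rightarrow> (nat \<Rightarrow> nat) pmf) \<Rightarrow> (nat \<Rightarrow> nat) \<Rightarrow> (nat \<Rightarrow> nat) pmf" where
  "gw_step d p z = gw_step_upto p z d"

fun gw_path :: "nat \<Rightarrow> (nat \<Rightarrow> (nat \<Rightarrow> nat) pmf) \<Rightarrow> (nat \<Rightarrow> nat) \<Rightarrow> nat \<Rightarrow> (nat \<Rightarrow> nat) list pmf" where
  "gw_path d p z0 0 = return_pmf [z0]"
| "gw_path d p z0 (Suc n) =
     bind_pmf (gw_path d p z0 n) (\<lambda>zs. map_pmf (\<lambda>z'. zs @ [z']) (gw_step d p (last zs)))"

text \<open>E(Y_{n,l} | Z_0 = e_m), where Y_n = Z_0 + ... + Z_n is the total progeny.\<close>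
definition exp_total_progeny :: "nat \<Rightarrow> (nat \<Rightarrow> (nat \<Rightarrow> nat) pmf) \<Rightarrow> nat \<Rightarrow> nat \<Rightarrow> nat \<Rightarrow> real" where
  "exp_total_progeny d p m n l =
     measure_pmf.expectation (gw_path d p (unitv m) n) (\<lambda>zs. real (\<Sum>z\<leftarrow>zs. z l))"

end

theory Submission
  imports Defs "Jordan_Normal_Form.Spectral_Radius"
begin


definition matvec :: "nat \<Rightarrow> (nat \<Rightarrow> nat \<Rightarrow> real) \<Rightarrow> (nat \<Rightarrow> real) \<Rightarrow> nat \<Rightarrow> real" where
  "matvec d A x = (\<lambda>i. \<Sum>j<d. A i j * x j)"

lemma matpow_add:
  assumes "i < d" "j < d"
  shows "matpow d A (m + n) i j = (\<Sum>r<d. matpow d A m i r * matpow d A n r j)"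
  using assms(2)
proof (induction n arbitrary: j)
  case 0
  have "(\<Sum>r<d. matpow d A m i r * matpow d A 0 r j) = (\<Sum>r\<in>{j}. matpow d A m i r * matpow d A 0 r j)"
    by (rule sum.mono_neutral_right) (use 0 in auto)
  then show ?case by simp
next
  case (Suc n)
  have "matpow d A (m + Suc n) i j = (\<Sum>s<d. matpow d A (m+n) i s * A s j)"
    by (simp add: matmul_def)
  also have "\<dots> = (\<Sum>s<d. (\<Sum>r<d. matpow d A m i r * matpow d A n r s) * A s j)"
    using Suc.IH by simp
  also have "\<dots> = (\<Sum>s<d. \<Sum>r<d. matpow d A m i r * matpow d A n r s * A s j)"
    by (simp add: sum_distrib_right)
  also have "\<dots> = (\<Sum>r<d. \<Sum>s<d. matpow d A m i r * matpow d A n r s * A s j)"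
    by (rule sum.swap)
  also have "\<dots> = (\<Sum>r<d. matpow d A m i r * (\<Sum>s<d. matpow d A n r s * A s j))"
    by (simp add: sum_distrib_left mult.assoc)
  also have "\<dots> = (\<Sum>r<d. matpow d A m i r * matpow d A (Suc n) r j)"
    by (simp add: matmul_def)
  finally show ?case .
qed

lemma matpow_one: "i < d \<Longrightarrow> matpow d A 1 i j = A i j"
proof -
  assume "i < d"
  have "matpow d A 1 i j = (\<Sum>r<d. (if i = r then 1 else 0) * A r j)" by (simp add: matmul_def)
  also have "\<dots> = (\<Sum>r\<in>{i}. (if i = r then 1 else 0) * A r j)"
    by (rule sum.mono_neutral_right) (use \<open>i<d\<close> in auto)
  finally show ?thesis by simp
qed

lemma matpow_Suc_left:
  assumes "i < d" "j < d"
  shows "matpow d A (Suc n) i j = (\<Sum>r<d. A i r * matpow d A n r j)"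
  using matpow_add[OF assms, of A 1 n] matpow_one[OF assms(1)] by simp

lemma matpow_scale: "matpow d (\<lambda>i j. c * A i j) n i j = c ^ n * matpow d A n i j"
  by (induction n arbitrary: i j) (auto simp: matmul_def sum_distrib_left mult_ac)

lemma matpow_nonneg: "(\<And>i j. 0 \<le> A i j) \<Longrightarrow> 0 \<le> matpow d A n i j"
  by (induction n arbitrary: i j) (auto simp: matmul_def intro!: sum_nonneg)

lemma matvec_mono:
  assumes "\<And>i j. 0 \<le> A i j" "\<And>j. j < d \<Longrightarrow> x j \<le> y j"
  shows "matvec d A x i \<le> matvec d A y i"
  unfolding matvec_def by (rule sum_mono) (use assms in \<open>auto intro: mult_left_mono\<close>)

lemma matvec_matpow_add:
  assumes "i < d"
  shows "matvec d (matpow d A (m + n)) x i = matvec d (matpow d A m) (matvec d (matpow d A n) x) i"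
proof -
  have "matvec d (matpow d A (m + n)) x i = (\<Sum>j<d. (\<Sum>r<d. matpow d A m i r * matpow d A n r j) * x j)"
    unfolding matvec_def by (rule sum.cong) (use matpow_add[OF assms] in auto)
  also have "\<dots> = (\<Sum>j<d. \<Sum>r<d. matpow d A m i r * matpow d A n r j * x j)"
    by (simp add: sum_distrib_right)
  also have "\<dots> = (\<Sum>r<d. \<Sum>j<d. matpow d A m i r * matpow d A n r j * x j)"
    by (rule sum.swap)
  also have "\<dots> = (\<Sum>r<d. matpow d A m i r * (\<Sum>j<d. matpow d A n r j * x j))"
    by (simp add: sum_distrib_left mult.assoc)
  finally show ?thesis by (simp add: matvec_def)
qed

lemma matvec_one: "i < d \<Longrightarrow> matvec d (matpow d A 1) x i = matvec d A x i"
  unfolding matvec_def using matpow_one[of i d A] by (simp del: matpow.simps)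

lemma matpow_super:
  assumes nn: "\<And>i j. 0 \<le> A i j" and c: "c \<ge> 0"
    and sup: "\<And>i. i < d \<Longrightarrow> matvec d A x i \<ge> c * x i"
    and i: "i < d"
  shows "matvec d (matpow d A n) x i \<ge> c ^ n * x i"
  using i
proof (induction n arbitrary: i)
  case 0
  have "matvec d (matpow d A 0) x i = (\<Sum>j<d. (if i = j then 1 else 0) * x j)"
    by (simp add: matvec_def)
  also have "\<dots> = (\<Sum>j\<in>{i}. (if i = j then 1 else 0) * x j)"
    by (rule sum.mono_neutral_right) (use 0 in auto)
  finally show ?case by simp
next
  case (Suc n)
  have "matvec d (matpow d A (Suc n)) x i = matvec d (matpow d A n) (matvec d (matpow d A 1) x) i"
    using matvec_matpow_add[OF Suc.prems, of A n 1] by simp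
  also have "\<dots> \<ge> matvec d (matpow d A n) (\<lambda>j. c * x j) i"
    by (rule matvec_mono) (use matpow_nonneg[OF nn] sup matvec_one in auto)
  also have "matvec d (matpow d A n) (\<lambda>j. c * x j) i = c * matvec d (matpow d A n) x i"
    by (simp add: matvec_def sum_distrib_left mult_ac)
  also have "\<dots> \<ge> c * (c ^ n * x i)"
    using Suc.IH[OF Suc.prems] c by (simp add: mult_left_mono)
  finally show ?case by (simp add: mult_ac)
qed

definition vecmat :: "nat \<Rightarrow> (nat \<Rightarrow> real) \<Rightarrow> (nat \<Rightarrow> nat \<Rightarrow> real) \<Rightarrow> nat \<Rightarrow> real" where
  "vecmat d x A = (\<lambda>j. \<Sum>i<d. x i * A i j)"

lemma vecmat_eig_pow:
  assumes "\<And>j. j < d \<Longrightarrow> vecmat d x A j = c * x j" "j < d"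
  shows "vecmat d x (matpow d A n) j = c ^ n * x j"
  using assms(2)
proof (induction n arbitrary: j)
  case 0
  have "vecmat d x (matpow d A 0) j = (\<Sum>i<d. x i * (if i = j then 1 else 0))"
    by (simp add: vecmat_def)
  also have "\<dots> = (\<Sum>i\<in>{j}. x i * (if i = j then 1 else 0))"
    by (rule sum.mono_neutral_right) (use 0 in auto)
  finally show ?case by simp
next
  case (Suc n)
  have "vecmat d x (matpow d A (Suc n)) j = (\<Sum>i<d. \<Sum>r<d. x i * matpow d A n i r * A r j)"
    by (simp add: vecmat_def matmul_def sum_distrib_left mult.assoc)
  also have "\<dots> = (\<Sum>r<d. \<Sum>i<d. x i * matpow d A n i r * A r j)"
    by (rule sum.swap)
  also have "\<dots> = (\<Sum>r<d. vecmat d x (matpow d A n) r * A r j)"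
    by (simp add: vecmat_def sum_distrib_right)
  also have "\<dots> = (\<Sum>r<d. c ^ n * x r * A r j)"
    using Suc.IH by simp
  also have "\<dots> = c ^ n * vecmat d x A j"
    by (simp add: vecmat_def sum_distrib_left mult_ac)
  finally show ?case using assms(1)[OF Suc.prems] by simp
qed

lemma matvec_eig_pow:
  assumes "\<And>i. i < d \<Longrightarrow> matvec d A x i = c * x i" "i < d"
  shows "matvec d (matpow d A n) x i = c ^ n * x i"
  using assms(2)
proof (induction n arbitrary: i)
  case 0
  have "matvec d (matpow d A 0) x i = (\<Sum>j<d. (if i = j then 1 else 0) * x j)"
    by (simp add: matvec_def)
  also have "\<dots> = (\<Sum>j\<in>{i}. (if i = j then 1 else 0) * x j)"
    by (rule sum.mono_neutral_right) (use 0 in auto)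
  finally show ?case by simp
next
  case (Suc n)
  have "matvec d (matpow d A (Suc n)) x i = matvec d (matpow d A n) (matvec d (matpow d A 1) x) i"
    using matvec_matpow_add[OF Suc.prems, of A n 1] by simp
  note h1 = this
  have e: "matvec d (matpow d A 1) x j = c * x j" if "j < d" for j
    using assms(1)[OF that] matvec_one[OF that, of A x] by (simp del: matpow.simps)
  have "matvec d (matpow d A n) (matvec d (matpow d A 1) x) i = matvec d (matpow d A n) (\<lambda>j. c * x j) i"
    unfolding matvec_def[of d "matpow d A n"] by (rule sum.cong) (use e in auto)
  also have "\<dots> = c * matvec d (matpow d A n) x i"
    by (simp add: matvec_def sum_distrib_left mult_ac)
  finally show ?case using Suc.IH[OF Suc.prems] h1 by simp
qed



lemma doeblin:
  fixes d U j m l :: nat and A :: "nat \<Rightarrow> nat \<Rightarrow> real" and u v :: "nat \<Rightarrow> real" and \<alpha> :: real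
  assumes nn: "\<And>i j. 0 \<le> A i j"
    and ueig: "\<And>i. i < d \<Longrightarrow> matvec d A u i = u i"
    and veig: "\<And>j. j < d \<Longrightarrow> vecmat d v A j = v j"
    and upos: "\<And>i. i < d \<Longrightarrow> u i > 0" and vpos: "\<And>i. i < d \<Longrightarrow> v i \<ge> 0"
    and usum: "(\<Sum>i<d. u i) = 1" and uv: "(\<Sum>i<d. u i * v i) = 1"
    and U: "U \<ge> 1" and alpha: "\<And>i j. i < d \<Longrightarrow> j < d \<Longrightarrow> matpow d A U i j \<ge> \<alpha>"
    and a0: "\<alpha> \<ge> 0"
    and m: "m < d" and l: "l < d"
  shows "\<bar>matpow d A j m l - u m * v l\<bar> \<le> (1 - \<alpha>) ^ (j div U) / u l"
proof -
  define B where "B = matpow d A U"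
  have ule1: "u i \<le> 1" if "i < d" for i
  proof -
    have "u i \<le> (\<Sum>i<d. u i)"
      by (rule member_le_sum) (use that upos in \<open>auto intro: less_imp_le\<close>)
    then show ?thesis using usum by simp
  qed
  have Beig: "matvec d B u i = u i" if "i < d" for i
    using matvec_eig_pow[of d A u 1 i U] ueig that by (simp add: B_def)
  have alpha_le: "\<alpha> \<le> 1"
  proof -
    have "(\<Sum>j<d. \<alpha> * u j) \<le> (\<Sum>j<d. B m j * u j)"
      by (rule sum_mono) (use alpha m upos in \<open>auto simp: B_def intro: mult_right_mono less_imp_le\<close>)
    also have "\<dots> = u m" using Beig[OF m] by (simp add: matvec_def)
    finally have "\<alpha> \<le> u m" using usum by (simp add: sum_distrib_left[symmetric])
    then show ?thesis using ule1[OF m] by simp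
  qed
  define \<theta> where "\<theta> = 1 - \<alpha>"
  have th0: "\<theta> \<ge> 0" using alpha_le by (simp add: \<theta>_def)
  have L1: "lo * u i \<le> matvec d A g i \<and> matvec d A g i \<le> hi * u i"
    if b: "\<And>i. i < d \<Longrightarrow> lo * u i \<le> g i \<and> g i \<le> hi * u i" and i: "i < d" for lo hi g i
  proof -
    have "(\<Sum>j<d. A i j * (g j - lo * u j)) = matvec d A g i - lo * matvec d A u i"
      by (simp add: matvec_def right_diff_distrib sum_subtractf sum_distrib_left mult_ac)
    hence "matvec d A g i - lo * u i = (\<Sum>j<d. A i j * (g j - lo * u j))"
      using ueig[OF i] by simp
    also have "\<dots> \<ge> 0" by (rule sum_nonneg) (use b nn in auto)
    finally have 1: "lo * u i \<le> matvec d A g i" by simp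
    have "(\<Sum>j<d. A i j * (hi * u j - g j)) = hi * matvec d A u i - matvec d A g i"
      by (simp add: matvec_def right_diff_distrib sum_subtractf sum_distrib_left mult_ac)
    hence "hi * u i - matvec d A g i = (\<Sum>j<d. A i j * (hi * u j - g j))"
      using ueig[OF i] by simp
    also have "\<dots> \<ge> 0" by (rule sum_nonneg) (use b nn in auto)
    finally show ?thesis using 1 by simp
  qed
  have L2: "(lo + \<alpha> * ((\<Sum>j<d. g j) - lo)) * u i \<le> matvec d B g i \<and>
            matvec d B g i \<le> (hi - \<alpha> * (hi - (\<Sum>j<d. g j))) * u i"
    if b: "\<And>i. i < d \<Longrightarrow> lo * u i \<le> g i \<and> g i \<le> hi * u i" and i: "i < d" for lo hi g i
  proof -
    have s1: "(\<Sum>j<d. g j - lo * u j) = (\<Sum>j<d. g j) - lo"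
      using usum by (simp add: sum_subtractf sum_distrib_left[symmetric])
    have s2: "(\<Sum>j<d. hi * u j - g j) = hi - (\<Sum>j<d. g j)"
      using usum by (simp add: sum_subtractf sum_distrib_left[symmetric])
    have p1: "(\<Sum>j<d. g j) - lo \<ge> 0" unfolding s1[symmetric]
      by (rule sum_nonneg) (use b in auto)
    have p2: "hi - (\<Sum>j<d. g j) \<ge> 0" unfolding s2[symmetric]
      by (rule sum_nonneg) (use b in auto)
    have "(\<Sum>j<d. B i j * (g j - lo * u j)) = matvec d B g i - lo * matvec d B u i"
      by (simp add: matvec_def right_diff_distrib sum_subtractf sum_distrib_left mult_ac)
    hence "matvec d B g i - lo * u i = (\<Sum>j<d. B i j * (g j - lo * u j))"
      using Beig[OF i] by simp
    also have "\<dots> \<ge> (\<Sum>j<d. \<alpha> * (g j - lo * u j))"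
      by (rule sum_mono) (use b alpha i in \<open>auto simp: B_def intro: mult_right_mono\<close>)
    also have "(\<Sum>j<d. \<alpha> * (g j - lo * u j)) = \<alpha> * ((\<Sum>j<d. g j) - lo)"
      using s1 by (simp add: sum_distrib_left[symmetric])
    finally have 1: "lo * u i + \<alpha> * ((\<Sum>j<d. g j) - lo) \<le> matvec d B g i" by simp
    have "\<alpha> * ((\<Sum>j<d. g j) - lo) * u i \<le> \<alpha> * ((\<Sum>j<d. g j) - lo)"
      using p1 a0 ule1[OF i] mult_left_mono[of "u i" 1 "\<alpha> * ((\<Sum>j<d. g j) - lo)"]
      by (simp add: mult_ac)
    with 1 have r1: "(lo + \<alpha> * ((\<Sum>j<d. g j) - lo)) * u i \<le> matvec d B g i"
      by (simp add: algebra_simps)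
    have "(\<Sum>j<d. B i j * (hi * u j - g j)) = hi * matvec d B u i - matvec d B g i"
      by (simp add: matvec_def right_diff_distrib sum_subtractf sum_distrib_left mult_ac)
    hence "hi * u i - matvec d B g i = (\<Sum>j<d. B i j * (hi * u j - g j))"
      using Beig[OF i] by simp
    also have "\<dots> \<ge> (\<Sum>j<d. \<alpha> * (hi * u j - g j))"
      by (rule sum_mono) (use b alpha i in \<open>auto simp: B_def intro: mult_right_mono\<close>)
    also have "(\<Sum>j<d. \<alpha> * (hi * u j - g j)) = \<alpha> * (hi - (\<Sum>j<d. g j))"
      using s2 by (simp add: sum_distrib_left[symmetric])
    finally have 2: "matvec d B g i \<le> hi * u i - \<alpha> * (hi - (\<Sum>j<d. g j))" by simp
    have "\<alpha> * (hi - (\<Sum>j<d. g j)) * u i \<le> \<alpha> * (hi - (\<Sum>j<d. g j))"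
      using p2 a0 ule1[OF i] mult_left_mono[of "u i" 1 "\<alpha> * (hi - (\<Sum>j<d. g j))"]
      by (simp add: mult_ac)
    with 2 have "matvec d B g i \<le> (hi - \<alpha> * (hi - (\<Sum>j<d. g j))) * u i"
      by (simp add: algebra_simps)
    with r1 show ?thesis by simp
  qed
  define col where "col n = (\<lambda>i. matpow d A n i l)" for n
  have colS: "col (Suc n) i = matvec d A (col n) i" if "i < d" for n i
    using matpow_Suc_left[OF that l, of A n] by (simp add: col_def matvec_def del: matpow.simps)
  have colU: "col (U + n) i = matvec d B (col n) i" if "i < d" for n i
    using matpow_add[OF that l, of A U n] by (simp add: col_def matvec_def B_def del: matpow.simps)
  have C: "\<exists>lo hi. (\<forall>i<d. lo * u i \<le> col (U * q) i \<and> col (U * q) i \<le> hi * u i) \<and> hi - lo \<le> \<theta> ^ q / u l" for q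
  proof (induction q)
    case 0
    have "(\<forall>i<d. 0 * u i \<le> col (U * 0) i \<and> col (U * 0) i \<le> (1 / u l) * u i)"
      using upos l by (auto simp: col_def less_imp_le dest: upos)
    then show ?case by (intro exI[of _ 0] exI[of _ "1 / u l"]) auto
  next
    case (Suc q)
    then obtain lo hi where b: "\<forall>i<d. lo * u i \<le> col (U * q) i \<and> col (U * q) i \<le> hi * u i"
      and w: "hi - lo \<le> \<theta> ^ q / u l" by blast
    define lo' where "lo' = lo + \<alpha> * ((\<Sum>j<d. col (U * q) j) - lo)"
    define hi' where "hi' = hi - \<alpha> * (hi - (\<Sum>j<d. col (U * q) j))"
    have "\<forall>i<d. lo' * u i \<le> col (U * Suc q) i \<and> col (U * Suc q) i \<le> hi' * u i"
      using L2[of lo "col (U * q)" hi] b colU[of _ "U * q"] unfolding lo'_def hi'_def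
      by (simp add: algebra_simps)
    moreover have "hi' - lo' = \<theta> * (hi - lo)" by (simp add: hi'_def lo'_def \<theta>_def algebra_simps)
    moreover have "\<theta> * (hi - lo) \<le> \<theta> * (\<theta> ^ q / u l)" using w th0 by (rule mult_left_mono)
    ultimately show ?case by (intro exI[of _ lo'] exI[of _ hi']) auto
  qed
  have C2: "\<exists>lo hi. (\<forall>i<d. lo * u i \<le> col (U * q + r) i \<and> col (U * q + r) i \<le> hi * u i) \<and> hi - lo \<le> \<theta> ^ q / u l" for q r
  proof (induction r)
    case 0
    then show ?case using C[of q] by simp
  next
    case (Suc r)
    then obtain lo hi where b: "\<forall>i<d. lo * u i \<le> col (U * q + r) i \<and> col (U * q + r) i \<le> hi * u i"
      and w: "hi - lo \<le> \<theta> ^ q / u l" by blast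
    have "\<forall>i<d. lo * u i \<le> col (U * q + Suc r) i \<and> col (U * q + Suc r) i \<le> hi * u i"
      using L1[of lo "col (U * q + r)" hi] b colS[of _ "U * q + r"] by simp
    then show ?case using w by blast
  qed
  have jeq: "j = U * (j div U) + j mod U" by simp
  obtain lo hi where b: "\<forall>i<d. lo * u i \<le> col j i \<and> col j i \<le> hi * u i"
    and w: "hi - lo \<le> \<theta> ^ (j div U) / u l"
    using C2[of "j div U" "j mod U"] jeq by metis
  have vl: "v l = (\<Sum>i<d. v i * col j i)"
    using vecmat_eig_pow[of d v A 1 l j] veig l by (simp add: vecmat_def col_def)
  have "(\<Sum>i<d. v i * (lo * u i)) \<le> (\<Sum>i<d. v i * col j i)"
    by (rule sum_mono) (use b vpos in \<open>auto intro: mult_left_mono\<close>)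
  hence vlo: "lo \<le> v l" using uv vl by (simp add: sum_distrib_left[symmetric] mult_ac)
  have "(\<Sum>i<d. v i * col j i) \<le> (\<Sum>i<d. v i * (hi * u i))"
    by (rule sum_mono) (use b vpos in \<open>auto intro: mult_left_mono\<close>)
  hence vhi: "v l \<le> hi" using uv vl by (simp add: sum_distrib_left[symmetric] mult_ac)
  have um: "0 < u m" "u m \<le> 1" using upos[OF m] ule1[OF m] by auto
  have bm: "lo * u m \<le> col j m" "col j m \<le> hi * u m" using b m by auto
  have "\<bar>col j m - u m * v l\<bar> \<le> u m * (hi - lo)"
  proof -
    have "col j m - u m * v l \<le> u m * (hi - lo)"
    proof -
      have "u m * lo \<le> u m * v l" using vlo um by (simp add: mult_left_mono)
      then show ?thesis using bm(2) by (simp add: algebra_simps)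
    qed
    moreover have "u m * v l - col j m \<le> u m * (hi - lo)"
    proof -
      have "u m * v l \<le> u m * hi" using vhi um by (simp add: mult_left_mono)
      then show ?thesis using bm(1) by (simp add: algebra_simps)
    qed
    ultimately show ?thesis by linarith
  qed
  also have "\<dots> \<le> hi - lo"
  proof -
    have "lo * u m \<le> hi * u m" using bm by linarith
    hence "lo \<le> hi" using um by simp
    thus ?thesis using um mult_right_mono[of "u m" 1 "hi - lo"] by simp
  qed
  also have "\<dots> \<le> \<theta> ^ (j div U) / u l" by (rule w)
  finally show ?thesis by (simp add: col_def \<theta>_def)
qed



definition CM :: "nat \<Rightarrow> (nat \<Rightarrow> nat \<Rightarrow> real) \<Rightarrow> complex mat" where
  "CM d M = mat d d (\<lambda>(i,j). complex_of_real (M i j))"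

lemma CM_dims[simp]: "dim_row (CM d M) = d" "dim_col (CM d M) = d" by (simp_all add: CM_def)

lemma CM_carrier: "CM d M \<in> carrier_mat d d" by (simp add: CM_def)

lemma CM_mult_vec: "i < d \<Longrightarrow> dim_vec w = d \<Longrightarrow> (CM d M *\<^sub>v w) $ i = (\<Sum>j<d. complex_of_real (M i j) * w $ j)"
  by (simp add: CM_def scalar_prod_def lessThan_atLeast0)

lemma is_eig_iff: "is_eigenvalue d M mu \<longleftrightarrow> eigenvalue (CM d M) mu"
proof
  assume "is_eigenvalue d M mu"
  then obtain x where x: "\<exists>i<d. x i \<noteq> 0" "\<And>i. i < d \<Longrightarrow> (\<Sum>j<d. complex_of_real (M i j) * x j) = mu * x i"
    unfolding is_eigenvalue_def by blast
  define w where "w = Matrix.vec d x"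
  have "eigenvector (CM d M) w mu"
    unfolding eigenvector_def
  proof (intro conjI)
    show "w \<in> carrier_vec (dim_row (CM d M))" by (simp add: w_def CM_def)
    show "w \<noteq> 0\<^sub>v (dim_row (CM d M))" using x(1) by (auto simp: w_def CM_def vec_eq_iff)
    show "CM d M *\<^sub>v w = mu \<cdot>\<^sub>v w"
    proof (rule eq_vecI)
      fix i assume "i < dim_vec (mu \<cdot>\<^sub>v w)" hence i: "i < d" by (simp add: w_def)
      have "(CM d M *\<^sub>v w) $ i = (\<Sum>j<d. complex_of_real (M i j) * w $ j)"
        by (rule CM_mult_vec[OF i]) (simp add: w_def)
      also have "\<dots> = (\<Sum>j<d. complex_of_real (M i j) * x j)" by (simp add: w_def)
      also have "\<dots> = mu * x i" by (rule x(2)[OF i])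
      finally show "(CM d M *\<^sub>v w) $ i = (mu \<cdot>\<^sub>v w) $ i" using i by (simp add: w_def)
    qed (simp add: w_def)
  qed
  then show "eigenvalue (CM d M) mu" unfolding eigenvalue_def by blast
next
  assume "eigenvalue (CM d M) mu"
  then obtain w where w: "eigenvector (CM d M) w mu" unfolding eigenvalue_def by blast
  have dw: "dim_vec w = d" using w by (auto simp: eigenvector_def CM_def)
  have nz: "\<exists>i<d. w $ i \<noteq> 0" using w dw by (auto simp: eigenvector_def CM_def vec_eq_iff)
  have eq: "(\<Sum>j<d. complex_of_real (M i j) * w $ j) = mu * w $ i" if "i < d" for i
  proof -
    have h: "CM d M *\<^sub>v w = mu \<cdot>\<^sub>v w" using w by (simp add: eigenvector_def)
    have "(\<Sum>j<d. complex_of_real (M i j) * w $ j) = (CM d M *\<^sub>v w) $ i"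
      by (rule CM_mult_vec[OF that dw, symmetric])
    also have "\<dots> = (mu \<cdot>\<^sub>v w) $ i" by (simp only: h)
    also have "\<dots> = mu * w $ i" using that dw by simp
    finally show ?thesis .
  qed
  show "is_eigenvalue d M mu" unfolding is_eigenvalue_def
    by (rule exI[of _ "\<lambda>i. w $ i"]) (use nz eq in auto)
qed

lemma eig_set_eq: "{cmod mu | mu. is_eigenvalue d M mu} = norm ` spectrum (CM d M)"
  by (auto simp: spectrum_def is_eig_iff)

lemma perron_root_ge:
  assumes "d > 0" "is_eigenvalue d M mu"
  shows "cmod mu \<le> perron_root d M"
proof -
  have "perron_root d M = spectral_radius (CM d M)"
    unfolding perron_root_def spectral_radius_def eig_set_eq ..
  moreover have "cmod mu \<in> norm ` spectrum (CM d M)"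
    using assms(2) by (auto simp: spectrum_def is_eig_iff)
  ultimately show ?thesis using spectral_radius_mem_max(2)[OF CM_carrier assms(1)] by simp
qed

lemma CM_pow: "i < d \<Longrightarrow> j < d \<Longrightarrow> (CM d M ^\<^sub>m k) $$ (i,j) = complex_of_real (matpow d M k i j)"
proof (induction k arbitrary: i j)
  case 0
  then show ?case by (simp add: CM_def)
next
  case (Suc k)
  have c: "CM d M ^\<^sub>m k \<in> carrier_mat d d" by (rule pow_carrier_mat[OF CM_carrier])
  have "(CM d M ^\<^sub>m Suc k) $$ (i,j) = (\<Sum>r<d. (CM d M ^\<^sub>m k) $$ (i,r) * (CM d M) $$ (r,j))"
    using Suc.prems c by (simp add: scalar_prod_def lessThan_atLeast0 CM_def)
  also have "\<dots> = (\<Sum>r<d. complex_of_real (matpow d M k i r) * complex_of_real (M r j))"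
    by (rule sum.cong) (use Suc in \<open>auto simp: CM_def\<close>)
  finally show ?case by (simp add: matmul_def)
qed

lemma growth_bound:
  assumes d: "d > 0" and r: "\<rho> > 0" and mx: "\<And>mu. is_eigenvalue d M mu \<Longrightarrow> cmod mu \<le> \<rho>"
  shows "\<exists>c1 c2. \<forall>k i j. i < d \<longrightarrow> j < d \<longrightarrow> \<bar>matpow d M k i j\<bar> \<le> \<rho> ^ k * (c1 + c2 * real k ^ (d - 1))"
proof -
  define M' where "M' = (\<lambda>i j. (1 / \<rho>) * M i j)"
  have mx': "cmod mu \<le> 1" if "is_eigenvalue d M' mu" for mu
  proof -
    from that obtain x where x: "\<exists>i<d. x i \<noteq> 0" "\<And>i. i < d \<Longrightarrow> (\<Sum>j<d. complex_of_real (M' i j) * x j) = mu * x i"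
      unfolding is_eigenvalue_def by blast
    have "is_eigenvalue d M (complex_of_real \<rho> * mu)"
      unfolding is_eigenvalue_def
    proof (intro exI[of _ x] conjI allI impI)
      show "\<exists>i<d. x i \<noteq> 0" by fact
      fix i assume i: "i < d"
      have "(\<Sum>j<d. complex_of_real (M i j) * x j) = complex_of_real \<rho> * (\<Sum>j<d. complex_of_real (M' i j) * x j)"
        using r by (simp add: M'_def sum_distrib_left)
      then show "(\<Sum>j<d. complex_of_real (M i j) * x j) = complex_of_real \<rho> * mu * x i"
        using x(2)[OF i] by simp
    qed
    from mx[OF this] r have "\<rho> * cmod mu \<le> \<rho>" by (simp add: norm_mult)
    then show ?thesis using r by simp
  qed
  have "spectral_radius (CM d M') \<le> 1"
  proof -
    from spectral_radius_mem_max(1)[OF CM_carrier d, of M']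
    obtain mu where "spectral_radius (CM d M') = cmod mu" "eigenvalue (CM d M') mu"
      by (auto simp: spectrum_def)
    then show ?thesis using mx' by (simp add: is_eig_iff)
  qed
  from spectral_radius_jnf_norm_bound_le_1_upper_triangular[OF CM_carrier this]
  obtain c1 c2 where b: "\<And>k. norm_bound (CM d M' ^\<^sub>m k) (c1 + c2 * real k ^ (d - 1))" by blast
  have "\<bar>matpow d M k i j\<bar> \<le> \<rho> ^ k * (c1 + c2 * real k ^ (d - 1))" if "i < d" "j < d" for k i j
  proof -
    have cc: "CM d M' ^\<^sub>m k \<in> carrier_mat d d" by (rule pow_carrier_mat[OF CM_carrier])
    have "norm ((CM d M' ^\<^sub>m k) $$ (i,j)) \<le> c1 + c2 * real k ^ (d - 1)"
      using b[of k] that cc unfolding norm_bound_def by auto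
    hence "\<bar>matpow d M' k i j\<bar> \<le> c1 + c2 * real k ^ (d - 1)" using CM_pow[OF that] by simp
    moreover have "matpow d M' k i j = (1/\<rho>) ^ k * matpow d M k i j"
      unfolding M'_def by (rule matpow_scale)
    ultimately have "(1/\<rho>) ^ k * \<bar>matpow d M k i j\<bar> \<le> c1 + c2 * real k ^ (d - 1)"
      using r by (simp add: abs_mult)
    hence "\<rho> ^ k * ((1/\<rho>) ^ k * \<bar>matpow d M k i j\<bar>) \<le> \<rho> ^ k * (c1 + c2 * real k ^ (d - 1))"
      using r by (simp add: mult_left_mono)
    then show ?thesis using r by (simp add: power_one_over field_simps)
  qed
  then show ?thesis by blast
qed

lemma exp_beats_poly:
  fixes r C D :: real and p :: nat
  assumes "r > 1"
  shows "\<exists>j. r ^ j > C + D * real j ^ p"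
proof (rule ccontr)
  assume "\<not> ?thesis"
  hence le: "r ^ j \<le> C + D * real j ^ p" for j by (simp add: not_less)
  have lr: "ln r > 0" using assms by simp
  have f0: "filterlim (\<lambda>j. ln r * real j) at_top sequentially"
    by (rule filterlim_tendsto_pos_mult_at_top[OF tendsto_const lr filterlim_real_sequentially])
  have f: "filterlim (\<lambda>j. real j * ln r) at_top sequentially"
    using f0 by (simp add: mult.commute)
  have "((\<lambda>j. (real j * ln r) ^ p / exp (real j * ln r)) \<longlongrightarrow> 0) sequentially"
    using filterlim_compose[OF tendsto_power_div_exp_0 f] by simp
  moreover have "(real j * ln r) ^ p / exp (real j * ln r) = ln r ^ p * (real j ^ p / r ^ j)" for j
  proof -
    have "exp (real j * ln r) = exp (ln r) ^ j" by (rule exp_of_nat_mult)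
    also have "\<dots> = r ^ j" using assms by simp
    finally show ?thesis by (simp add: power_mult_distrib)
  qed
  ultimately have "((\<lambda>j. ln r ^ p * (real j ^ p / r ^ j)) \<longlongrightarrow> 0) sequentially" by simp
  hence "((\<lambda>j. (1 / ln r ^ p) * (ln r ^ p * (real j ^ p / r ^ j))) \<longlongrightarrow> (1 / ln r ^ p) * 0) sequentially"
    by (intro tendsto_mult tendsto_const)
  hence t1: "(\<lambda>j. real j ^ p / r ^ j) \<longlonglongrightarrow> 0" using lr by simp
  have t2: "(\<lambda>j. 1 / r ^ j) \<longlonglongrightarrow> 0"
    using LIMSEQ_inverse_realpow_zero[of r] assms by (simp add: divide_inverse)
  have tt: "(\<lambda>j. C * (1 / r ^ j) + D * (real j ^ p / r ^ j)) \<longlonglongrightarrow> C * 0 + D * 0"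
    by (intro tendsto_intros t1 t2)
  have "eventually (\<lambda>j. C * (1 / r ^ j) + D * (real j ^ p / r ^ j) < 1) sequentially"
    using order_tendstoD(2)[OF tt, of 1] by simp
  then obtain j where "C * (1 / r ^ j) + D * (real j ^ p / r ^ j) < 1"
    by (auto simp: eventually_sequentially)
  hence "(C + D * real j ^ p) / r ^ j < 1" by (simp add: add_divide_distrib)
  hence "C + D * real j ^ p < r ^ j" using assms by (simp add: divide_less_eq)
  with le[of j] show False by simp
qed



lemma matpow_mul:
  assumes "i < d" "k < d"
  shows "matpow d (matpow d M U) j i k = matpow d M (U * j) i k"
  using assms(2)
proof (induction j arbitrary: k)
  case 0
  then show ?case by simp
next
  case (Suc j)
  have "matpow d (matpow d M U) (Suc j) i k = (\<Sum>r<d. matpow d (matpow d M U) j i r * matpow d M U r k)"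
    by (simp add: matmul_def)
  also have "\<dots> = (\<Sum>r<d. matpow d M (U * j) i r * matpow d M U r k)"
    by (rule sum.cong) (use Suc.IH in auto)
  also have "\<dots> = matpow d M (U * j + U) i k"
    by (rule matpow_add[OF assms(1) Suc.prems, symmetric])
  finally show ?case by (simp add: add.commute)
qed

lemma sum_pos_of_nonneg:
  fixes w :: "nat \<Rightarrow> real"
  assumes "\<And>i. i < d \<Longrightarrow> w i \<ge> 0" "i0 < d" "w i0 \<noteq> 0"
  shows "(\<Sum>i<d. w i) > 0"
proof -
  have "w i0 \<le> (\<Sum>i<d. w i)" by (rule member_le_sum) (use assms in auto)
  moreover have "w i0 > 0" using assms by force
  ultimately show ?thesis by simp
qed

lemma perron_pos:
  fixes d U :: nat and M :: "nat \<Rightarrow> nat \<Rightarrow> real" and u v :: "nat \<Rightarrow> real" and a \<rho> :: real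
  assumes d: "d \<ge> 1" and U: "U \<ge> 1" and r: "\<rho> > 0" and nn: "\<And>i j. 0 \<le> M i j"
    and pos: "\<And>i j. i < d \<Longrightarrow> j < d \<Longrightarrow> matpow d M U i j \<ge> a" and a: "a > 0"
    and mx: "\<And>mu. is_eigenvalue d M mu \<Longrightarrow> cmod mu \<le> \<rho>"
    and ueig: "\<And>i. i < d \<Longrightarrow> (\<Sum>j<d. M i j * u j) = \<rho> * u i"
    and veig: "\<And>j. j < d \<Longrightarrow> (\<Sum>i<d. v i * M i j) = \<rho> * v j"
    and usum: "(\<Sum>i<d. u i) = 1" and uv: "(\<Sum>i<d. u i * v i) = 1"
  shows "(\<forall>i<d. u i > 0) \<and> (\<forall>i<d. v i > 0)"
proof -
  define B where "B = matpow d M U"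
  define lam where "lam = \<rho> ^ U"
  have lam: "lam > 0" using r by (simp add: lam_def)
  have Bnn: "0 \<le> B i j" for i j unfolding B_def by (rule matpow_nonneg[OF nn])
  have Bpos: "matvec d B y i \<ge> a * (\<Sum>j<d. y j)" if "\<And>j. j < d \<Longrightarrow> y j \<ge> 0" "i < d" for y i
  proof -
    have "(\<Sum>j<d. a * y j) \<le> (\<Sum>j<d. B i j * y j)"
      by (rule sum_mono) (use that pos in \<open>auto simp: B_def intro: mult_right_mono\<close>)
    then show ?thesis by (simp add: matvec_def sum_distrib_left)
  qed
  have Bpos': "vecmat d y B j \<ge> a * (\<Sum>i<d. y i)" if "\<And>i. i < d \<Longrightarrow> y i \<ge> 0" "j < d" for y j
  proof -
    have "(\<Sum>i<d. a * y i) \<le> (\<Sum>i<d. y i * B i j)"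
    proof (rule sum_mono)
      fix i assume i: "i \<in> {..<d}"
      have "a * y i \<le> B i j * y i" using that i pos[of i j] by (auto simp: B_def intro: mult_right_mono)
      then show "a * y i \<le> y i * B i j" by (simp add: mult.commute)
    qed
    then show ?thesis by (simp add: vecmat_def sum_distrib_left)
  qed
  have Bu: "matvec d B u i = lam * u i" if "i < d" for i
    using matvec_eig_pow[of d M u \<rho> i U] ueig that by (simp add: B_def lam_def matvec_def)
  have vB: "vecmat d v B j = lam * v j" if "j < d" for j
    using vecmat_eig_pow[of d v M \<rho> j U] veig that by (simp add: B_def lam_def vecmat_def)
  obtain c1 c2 where gb: "\<And>k i j. i < d \<Longrightarrow> j < d \<Longrightarrow> \<bar>matpow d M k i j\<bar> \<le> \<rho> ^ k * (c1 + c2 * real k ^ (d - 1))"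
  proof -
    have "d > 0" using d by simp
    from growth_bound[OF this r mx] show ?thesis using that by blast
  qed
  define x where "x i = \<bar>u i\<bar>" for i
  have x0: "x i \<ge> 0" for i by (simp add: x_def)
  have xsup: "matvec d M x i \<ge> \<rho> * x i" if "i < d" for i
  proof -
    have "\<rho> * x i = \<bar>\<Sum>j<d. M i j * u j\<bar>" using ueig[OF that] r by (simp add: x_def abs_mult)
    also have "\<dots> \<le> (\<Sum>j<d. \<bar>M i j * u j\<bar>)" by (rule sum_abs)
    also have "\<dots> = matvec d M x i" using nn by (simp add: matvec_def x_def abs_mult)
    finally show ?thesis .
  qed
  have Bxsup: "matvec d B x i \<ge> lam * x i" if "i < d" for i
    unfolding B_def lam_def by (rule matpow_super[OF nn less_imp_le[OF r] xsup that])
  have xsum: "(\<Sum>i<d. x i) \<ge> 1"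
    using sum_abs[of u "{..<d}"] usum by (simp add: x_def)
  have Bxeq: "matvec d B x i = lam * x i" if i: "i < d" for i
  proof (rule ccontr)
    assume ne: "matvec d B x i \<noteq> lam * x i"
    define z where "z j = matvec d B x j - lam * x j" for j
    have z0: "z j \<ge> 0" if "j < d" for j using Bxsup[OF that] by (simp add: z_def)
    have zi: "z i \<noteq> 0"
    proof
      assume "z i = 0"
      then have "matvec d B x i = lam * x i" unfolding z_def by linarith
      with ne show False by simp
    qed
    have zsum: "(\<Sum>j<d. z j) > 0" by (rule sum_pos_of_nonneg[of d z i, OF z0 i zi])
    define y where "y = matvec d B x"
    have y0: "y j \<ge> a * (\<Sum>j<d. x j)" if "j < d" for j using Bpos[OF _ that, of x] x0 by (simp add: y_def)
    have ypos: "y j > 0" if "j < d" for j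
    proof -
      have "a * (\<Sum>j<d. x j) > 0" using a xsum by simp
      then show ?thesis using y0[OF that] by linarith
    qed
    define Y where "Y = (\<Sum>j<d. y j)"
    have yY: "y j \<le> Y" if "j < d" for j
      unfolding Y_def by (rule member_le_sum) (use that ypos in \<open>auto intro: less_imp_le\<close>)
    have Ypos: "Y > 0" using ypos[of 0] yY[of 0] d by simp
    define \<epsilon> where "\<epsilon> = a * (\<Sum>j<d. z j) / Y"
    have eps: "\<epsilon> > 0" using a zsum Ypos by (simp add: \<epsilon>_def)
    have Bysup: "matvec d B y j \<ge> (lam + \<epsilon>) * y j" if j: "j < d" for j
    proof -
      have "matvec d B y j = (\<Sum>k<d. B j k * (lam * x k + z k))"
        unfolding matvec_def[of d B y] by (rule sum.cong) (auto simp: z_def y_def)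
      also have "\<dots> = lam * matvec d B x j + matvec d B z j"
        by (simp add: matvec_def distrib_left sum.distrib sum_distrib_left mult_ac)
      also have "\<dots> = lam * y j + matvec d B z j" by (simp add: y_def)
      finally have e: "matvec d B y j = lam * y j + matvec d B z j" .
      have "matvec d B z j \<ge> a * (\<Sum>j<d. z j)" by (rule Bpos[OF z0 j])
      moreover have "a * (\<Sum>j<d. z j) \<ge> \<epsilon> * y j"
      proof -
        have "\<epsilon> * y j \<le> \<epsilon> * Y" using yY[OF j] eps by (simp add: mult_left_mono)
        also have "\<epsilon> * Y = a * (\<Sum>j<d. z j)" using Ypos by (simp add: \<epsilon>_def)
        finally show ?thesis .
      qed
      ultimately show ?thesis using e by (simp add: algebra_simps)
    qed
    have grow: "matvec d (matpow d B n) y 0 \<ge> (lam + \<epsilon>) ^ n * y 0" for n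
      by (rule matpow_super[OF Bnn _ Bysup]) (use lam eps d in auto)
    have upper: "matvec d (matpow d B n) y 0 \<le> lam ^ n * (c1 + c2 * real (U * n) ^ (d - 1)) * Y" for n
    proof -
      have "matvec d (matpow d B n) y 0 = (\<Sum>k<d. matpow d M (U * n) 0 k * y k)"
        unfolding matvec_def by (rule sum.cong) (use d in \<open>auto simp: B_def matpow_mul\<close>)
      also have "\<dots> \<le> (\<Sum>k<d. \<rho> ^ (U * n) * (c1 + c2 * real (U * n) ^ (d - 1)) * y k)"
      proof (rule sum_mono)
        fix k assume k: "k \<in> {..<d}"
        have "matpow d M (U * n) 0 k \<le> \<rho> ^ (U * n) * (c1 + c2 * real (U * n) ^ (d - 1))"
          using gb[of 0 k "U * n"] d k by auto
        then show "matpow d M (U * n) 0 k * y k \<le> \<rho> ^ (U * n) * (c1 + c2 * real (U * n) ^ (d - 1)) * y k"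
          using ypos k by (auto intro: mult_right_mono)
      qed
      also have "\<dots> = lam ^ n * (c1 + c2 * real (U * n) ^ (d - 1)) * Y"
        by (simp add: Y_def sum_distrib_left lam_def power_mult)
      finally show ?thesis .
    qed
    define R where "R = (lam + \<epsilon>) / lam"
    have R1: "R > 1" using lam eps by (simp add: R_def)
    obtain n where nbig: "R ^ n > (Y / y 0) * c1 + ((Y / y 0) * c2 * real U ^ (d - 1)) * real n ^ (d - 1)"
      using exp_beats_poly[OF R1] by blast
    have y00: "y 0 > 0" using ypos d by simp
    have "(lam + \<epsilon>) ^ n * y 0 \<le> lam ^ n * (c1 + c2 * real (U * n) ^ (d - 1)) * Y"
      using grow[of n] upper[of n] by linarith
    hence "R ^ n * lam ^ n * y 0 \<le> lam ^ n * (c1 + c2 * real (U * n) ^ (d - 1)) * Y"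
      using lam by (simp add: R_def power_divide)
    hence "R ^ n * y 0 \<le> (c1 + c2 * real (U * n) ^ (d - 1)) * Y"
      using lam by (simp add: mult_ac)
    hence "R ^ n \<le> (c1 + c2 * real (U * n) ^ (d - 1)) * Y / y 0"
      using y00 by (simp add: le_divide_eq)
    also have "\<dots> = (Y / y 0) * c1 + ((Y / y 0) * c2 * real U ^ (d - 1)) * real n ^ (d - 1)"
      using y00 by (simp add: power_mult_distrib divide_simps) (simp add: algebra_simps)
    finally show False using nbig by simp
  qed
  have xpos: "x i > 0" if "i < d" for i
  proof -
    have "lam * x i \<ge> a * (\<Sum>j<d. x j)" using Bpos[OF _ that, of x] x0 Bxeq[OF that] by simp
    moreover have "a * (\<Sum>j<d. x j) > 0" using a xsum by simp
    ultimately have "lam * x i > 0" by linarith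
    then show ?thesis using lam by (simp add: zero_less_mult_iff)
  qed
  have upos: "u i > 0" if i: "i < d" for i
  proof -
    define w where "w j = x j + u j" for j
    have w0: "w j \<ge> 0" for j by (simp add: w_def x_def)
    have Bw: "matvec d B w j = lam * w j" if "j < d" for j
      using Bxeq[OF that] Bu[OF that] by (simp add: w_def matvec_def distrib_left sum.distrib)
    show ?thesis
    proof (cases "\<exists>j<d. w j \<noteq> 0")
      case True
      then obtain j where j: "j < d" "w j \<noteq> 0" by blast
      have ws: "(\<Sum>j<d. w j) > 0" by (rule sum_pos_of_nonneg[of d w "j"]) (use w0 j in auto)
      have "lam * w i \<ge> a * (\<Sum>j<d. w j)" using Bpos[OF _ i, of w] w0 Bw[OF i] by simp
      moreover have "a * (\<Sum>j<d. w j) > 0" using a ws by simp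
      ultimately have "lam * w i > 0" by linarith
      then have "w i > 0" using lam by (simp add: zero_less_mult_iff)
      then have "u i > - \<bar>u i\<bar>" by (simp add: w_def x_def)
      then have "u i \<ge> 0" by linarith
      with xpos[OF i] show ?thesis by (simp add: x_def)
    next
      case False
      hence "u j = - x j" if "j < d" for j using that by (simp add: w_def) (metis add_eq_0_iff)
      hence "(\<Sum>j<d. u j) = - (\<Sum>j<d. x j)" by (simp add: sum_negf)
      with usum xsum show ?thesis by simp
    qed
  qed
  define x' where "x' i = \<bar>v i\<bar>" for i
  have x'0: "x' i \<ge> 0" for i by (simp add: x'_def)
  have x'sup: "vecmat d x' M j \<ge> \<rho> * x' j" if "j < d" for j
  proof -
    have "\<rho> * x' j = \<bar>\<Sum>i<d. v i * M i j\<bar>" using veig[OF that] r by (simp add: x'_def abs_mult)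
    also have "\<dots> \<le> (\<Sum>i<d. \<bar>v i * M i j\<bar>)" by (rule sum_abs)
    also have "\<dots> = vecmat d x' M j" using nn by (simp add: vecmat_def x'_def abs_mult)
    finally show ?thesis .
  qed
  have x'eig: "vecmat d x' M j = \<rho> * x' j" if j: "j < d" for j
  proof -
    have "(\<Sum>j<d. (vecmat d x' M j - \<rho> * x' j) * u j) = (\<Sum>i<d. x' i * (\<Sum>j<d. M i j * u j)) - \<rho> * (\<Sum>j<d. x' j * u j)"
    proof -
      have "(\<Sum>j<d. vecmat d x' M j * u j) = (\<Sum>j<d. \<Sum>i<d. x' i * M i j * u j)"
        by (simp add: vecmat_def sum_distrib_right)
      also have "\<dots> = (\<Sum>i<d. \<Sum>j<d. x' i * M i j * u j)" by (rule sum.swap)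
      also have "\<dots> = (\<Sum>i<d. x' i * (\<Sum>j<d. M i j * u j))" by (simp add: sum_distrib_left mult.assoc)
      finally have e1: "(\<Sum>j<d. vecmat d x' M j * u j) = (\<Sum>i<d. x' i * (\<Sum>j<d. M i j * u j))" .
      have "(\<Sum>j<d. (vecmat d x' M j - \<rho> * x' j) * u j) = (\<Sum>j<d. vecmat d x' M j * u j) - (\<Sum>j<d. \<rho> * x' j * u j)"
        by (simp add: left_diff_distrib sum_subtractf)
      also have "(\<Sum>j<d. \<rho> * x' j * u j) = \<rho> * (\<Sum>j<d. x' j * u j)"
        by (simp add: sum_distrib_left mult.assoc)
      finally show ?thesis using e1 by simp
    qed
    also have "\<dots> = 0" using ueig by (simp add: sum_distrib_left mult_ac)
    finally have s0: "(\<Sum>j<d. (vecmat d x' M j - \<rho> * x' j) * u j) = 0" .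
    have "\<forall>j\<in>{..<d}. (vecmat d x' M j - \<rho> * x' j) * u j = 0"
    proof (rule sum_nonneg_eq_0_iff[THEN iffD1, OF _ _ s0])
      show "finite {..<d}" by simp
      fix k assume k: "k \<in> {..<d}"
      have "vecmat d x' M k - \<rho> * x' k \<ge> 0" using x'sup[of k] k by simp
      moreover have "u k \<ge> 0" using upos[of k] k by simp
      ultimately show "0 \<le> (vecmat d x' M k - \<rho> * x' k) * u k" by (rule mult_nonneg_nonneg)
    qed
    then show ?thesis using j upos[OF j] by auto
  qed
  have x'B: "vecmat d x' B j = lam * x' j" if "j < d" for j
    using vecmat_eig_pow[of d x' M \<rho> j U] x'eig that by (simp add: B_def lam_def)
  have x'sum: "(\<Sum>i<d. x' i) > 0"
  proof -
    have "1 = \<bar>\<Sum>i<d. u i * v i\<bar>" using uv by simp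
    also have "\<dots> \<le> (\<Sum>i<d. \<bar>u i * v i\<bar>)" by (rule sum_abs)
    also have "\<dots> \<le> (\<Sum>i<d. x' i)"
    proof (rule sum_mono)
      fix i assume i: "i \<in> {..<d}"
      have "u i \<le> (\<Sum>i<d. u i)" by (rule member_le_sum) (use i upos in \<open>auto intro: less_imp_le\<close>)
      hence "u i \<le> 1" using usum by simp
      moreover have "u i > 0" using upos[of i] i by simp
      ultimately have "\<bar>u i\<bar> * \<bar>v i\<bar> \<le> 1 * \<bar>v i\<bar>"
        by (intro mult_right_mono) auto
      then show "\<bar>u i * v i\<bar> \<le> x' i" by (simp add: abs_mult x'_def)
    qed
    finally show ?thesis by simp
  qed
  have x'pos: "x' j > 0" if "j < d" for j
  proof -
    have "lam * x' j \<ge> a * (\<Sum>i<d. x' i)" using Bpos'[OF _ that, of x'] x'0 x'B[OF that] by simp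
    moreover have "a * (\<Sum>i<d. x' i) > 0" using a x'sum by simp
    ultimately have "lam * x' j > 0" by linarith
    then show ?thesis using lam by (simp add: zero_less_mult_iff)
  qed
  have vpos: "v i > 0" if i: "i < d" for i
  proof -
    define w where "w j = x' j + v j" for j
    have w0: "w j \<ge> 0" for j by (simp add: w_def x'_def)
    have wB: "vecmat d w B j = lam * w j" if "j < d" for j
      using x'B[OF that] vB[OF that] by (simp add: w_def vecmat_def distrib_left distrib_right sum.distrib)
    show ?thesis
    proof (cases "\<exists>j<d. w j \<noteq> 0")
      case True
      then obtain j where j: "j < d" "w j \<noteq> 0" by blast
      have ws: "(\<Sum>j<d. w j) > 0" by (rule sum_pos_of_nonneg[of d w "j"]) (use w0 j in auto)
      have "lam * w i \<ge> a * (\<Sum>j<d. w j)" using Bpos'[OF _ i, of w] w0 wB[OF i] by simp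
      moreover have "a * (\<Sum>j<d. w j) > 0" using a ws by simp
      ultimately have "lam * w i > 0" by linarith
      then have "w i > 0" using lam by (simp add: zero_less_mult_iff)
      then have "v i > - \<bar>v i\<bar>" by (simp add: w_def x'_def)
      then have "v i \<ge> 0" by linarith
      with x'pos[OF i] show ?thesis by (simp add: x'_def)
    next
      case False
      hence "v j = - x' j" if "j < d" for j using that by (simp add: w_def) (metis add_eq_0_iff)
      hence "(\<Sum>j<d. u j * v j) = - (\<Sum>j<d. u j * x' j)" by (simp add: sum_negf)
      moreover have "(\<Sum>j<d. u j * x' j) \<ge> 0"
        by (rule sum_nonneg) (use upos x'0 in \<open>auto intro: mult_nonneg_nonneg less_imp_le\<close>)
      ultimately show ?thesis using uv by simp
    qed
  qed
  show ?thesis using upos vpos by blast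
qed



definition Nm :: "(nat \<Rightarrow> (nat \<Rightarrow> nat) pmf) \<Rightarrow> nat \<Rightarrow> nat \<Rightarrow> ennreal" where
  "Nm p k l = (\<integral>\<^sup>+ x. of_nat (x l) \<partial>measure_pmf (p k))"

lemma pmf_nn_const: "(\<integral>\<^sup>+ x. c \<partial>measure_pmf q) = c"
  by (simp add: measure_pmf.emeasure_space_1)

lemma iid_mean: "(\<integral>\<^sup>+ y. of_nat (y l) \<partial>measure_pmf (iid_sum q n)) = of_nat n * (\<integral>\<^sup>+ x. of_nat (x l) \<partial>measure_pmf q)"
proof (induction n)
  case 0
  then show ?case by (simp add: nn_integral_return_pmf)
next
  case (Suc n)
  have "(\<integral>\<^sup>+ y. of_nat (y l) \<partial>measure_pmf (iid_sum q (Suc n)))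
      = (\<integral>\<^sup>+ x. (\<integral>\<^sup>+ y. of_nat (x l) + of_nat (y l) \<partial>measure_pmf (iid_sum q n)) \<partial>measure_pmf q)"
    by (simp add: nn_integral_bind_pmf nn_integral_map_pmf)
  also have "\<dots> = (\<integral>\<^sup>+ x. of_nat (x l) + of_nat n * (\<integral>\<^sup>+ x. of_nat (x l) \<partial>measure_pmf q) \<partial>measure_pmf q)"
    by (simp add: nn_integral_add pmf_nn_const Suc.IH)
  also have "\<dots> = (\<integral>\<^sup>+ x. of_nat (x l) \<partial>measure_pmf q) + of_nat n * (\<integral>\<^sup>+ x. of_nat (x l) \<partial>measure_pmf q)"
    by (simp add: nn_integral_add pmf_nn_const)
  finally show ?case by (simp add: algebra_simps)
qed

lemma step_mean: "(\<integral>\<^sup>+ y. of_nat (y l) \<partial>measure_pmf (gw_step_upto p z k)) = (\<Sum>i<k. of_nat (z i) * Nm p i l)"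
proof (induction k)
  case 0
  then show ?case by (simp add: nn_integral_return_pmf)
next
  case (Suc k)
  have "(\<integral>\<^sup>+ y. of_nat (y l) \<partial>measure_pmf (gw_step_upto p z (Suc k)))
      = (\<integral>\<^sup>+ x. (\<integral>\<^sup>+ y. of_nat (x l) + of_nat (y l) \<partial>measure_pmf (gw_step_upto p z k)) \<partial>measure_pmf (iid_sum (p k) (z k)))"
    by (simp add: nn_integral_bind_pmf nn_integral_map_pmf)
  also have "\<dots> = (\<integral>\<^sup>+ x. of_nat (x l) + (\<Sum>i<k. of_nat (z i) * Nm p i l) \<partial>measure_pmf (iid_sum (p k) (z k)))"
    by (simp add: nn_integral_add pmf_nn_const Suc.IH)
  also have "\<dots> = of_nat (z k) * Nm p k l + (\<Sum>i<k. of_nat (z i) * Nm p i l)"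
    by (simp add: nn_integral_add pmf_nn_const iid_mean Nm_def)
  finally show ?case by (simp add: algebra_simps)
qed

definition Gm :: "nat \<Rightarrow> (nat \<Rightarrow> (nat \<Rightarrow> nat) pmf) \<Rightarrow> (nat \<Rightarrow> nat) \<Rightarrow> nat \<Rightarrow> nat \<Rightarrow> ennreal" where
  "Gm d p z0 n i = (\<integral>\<^sup>+ zs. of_nat (last zs i) \<partial>measure_pmf (gw_path d p z0 n))"

lemma Gm_0: "Gm d p z0 0 i = of_nat (z0 i)"
  by (simp add: Gm_def nn_integral_return_pmf)

lemma Gm_Suc: "Gm d p z0 (Suc n) l = (\<Sum>i<d. Gm d p z0 n i * Nm p i l)"
proof -
  have "Gm d p z0 (Suc n) l = (\<integral>\<^sup>+ zs. (\<integral>\<^sup>+ z'. of_nat (z' l) \<partial>measure_pmf (gw_step d p (last zs))) \<partial>measure_pmf (gw_path d p z0 n))"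
    by (simp add: Gm_def nn_integral_bind_pmf nn_integral_map_pmf)
  also have "\<dots> = (\<integral>\<^sup>+ zs. (\<Sum>i<d. of_nat (last zs i) * Nm p i l) \<partial>measure_pmf (gw_path d p z0 n))"
    by (simp add: gw_step_def step_mean)
  also have "\<dots> = (\<Sum>i<d. (\<integral>\<^sup>+ zs. of_nat (last zs i) * Nm p i l \<partial>measure_pmf (gw_path d p z0 n)))"
    by (rule nn_integral_sum) simp
  also have "\<dots> = (\<Sum>i<d. Gm d p z0 n i * Nm p i l)"
    by (simp add: Gm_def nn_integral_multc)
  finally show ?thesis .
qed

lemma total_mean: "(\<integral>\<^sup>+ zs. of_nat (\<Sum>z\<leftarrow>zs. z l) \<partial>measure_pmf (gw_path d p z0 n)) = (\<Sum>j\<le>n. Gm d p z0 j l)"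
proof (induction n)
  case 0
  then show ?case by (simp add: nn_integral_return_pmf Gm_0)
next
  case (Suc n)
  have "(\<integral>\<^sup>+ zs. of_nat (\<Sum>z\<leftarrow>zs. z l) \<partial>measure_pmf (gw_path d p z0 (Suc n)))
     = (\<integral>\<^sup>+ zs. (\<integral>\<^sup>+ z'. of_nat (\<Sum>z\<leftarrow>zs. z l) + of_nat (z' l) \<partial>measure_pmf (gw_step d p (last zs))) \<partial>measure_pmf (gw_path d p z0 n))"
    by (simp add: nn_integral_bind_pmf nn_integral_map_pmf)
  also have "\<dots> = (\<integral>\<^sup>+ zs. of_nat (\<Sum>z\<leftarrow>zs. z l) + (\<integral>\<^sup>+ z'. of_nat (z' l) \<partial>measure_pmf (gw_step d p (last zs))) \<partial>measure_pmf (gw_path d p z0 n))"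
    by (simp add: nn_integral_add pmf_nn_const)
  also have "\<dots> = (\<integral>\<^sup>+ zs. of_nat (\<Sum>z\<leftarrow>zs. z l) \<partial>measure_pmf (gw_path d p z0 n)) + (\<integral>\<^sup>+ zs. (\<integral>\<^sup>+ z'. of_nat (z' l) \<partial>measure_pmf (gw_step d p (last zs))) \<partial>measure_pmf (gw_path d p z0 n))"
    by (rule nn_integral_add) simp_all
  also have "(\<integral>\<^sup>+ zs. (\<integral>\<^sup>+ z'. of_nat (z' l) \<partial>measure_pmf (gw_step d p (last zs))) \<partial>measure_pmf (gw_path d p z0 n)) = Gm d p z0 (Suc n) l"
    by (simp add: Gm_def nn_integral_bind_pmf nn_integral_map_pmf)
  finally show ?case using Suc.IH by simp
qed

lemma nat_le_cubic: "(n::nat) \<le> 2 + n * (n - 1) * (n - 1 - 1)"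
proof (cases "n \<le> 2")
  case True
  then show ?thesis by simp
next
  case False
  hence "n * 1 * 1 \<le> n * (n - 1) * (n - 1 - 1)" by (intro mult_le_mono) auto
  then have "n \<le> n * (n - 1) * (n - 1 - 1)" by simp
  then show ?thesis by linarith
qed

lemma Nm_finite:
  assumes K: "classK d a b c U p" and k: "k < d" and l: "l < d"
  shows "Nm p k l = ennreal (mean_mat p k l)"
proof -
  have s: "(\<Sum>k<d. \<Sum>l<d. \<Sum>m<d. \<Sum>j<d. deriv3 p k l m j) \<le> ennreal c" using K by (simp add: classK_def)
  have "deriv3 p k l l l \<le> (\<Sum>j<d. deriv3 p k l l j)" by (rule member_le_sum) (use l in auto)
  also have "\<dots> \<le> (\<Sum>m<d. \<Sum>j<d. deriv3 p k l m j)" by (rule member_le_sum[where f="\<lambda>m. \<Sum>j<d. deriv3 p k l m j"]) (use l in auto)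
  also have "\<dots> \<le> (\<Sum>l<d. \<Sum>m<d. \<Sum>j<d. deriv3 p k l m j)" by (rule member_le_sum[where f="\<lambda>l. \<Sum>m<d. \<Sum>j<d. deriv3 p k l m j"]) (use l in auto)
  also have "\<dots> \<le> (\<Sum>k<d. \<Sum>l<d. \<Sum>m<d. \<Sum>j<d. deriv3 p k l m j)" by (rule member_le_sum[where f="\<lambda>k. \<Sum>l<d. \<Sum>m<d. \<Sum>j<d. deriv3 p k l m j"]) (use k in auto)
  also note s
  finally have d3: "deriv3 p k l l l \<le> ennreal c" .
  have "Nm p k l \<le> (\<integral>\<^sup>+ x. 2 + ennreal (real (x l * (x l - 1) * (x l - 1 - 1))) \<partial>measure_pmf (p k))"
    unfolding Nm_def
  proof (rule nn_integral_mono)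
    fix x :: "nat \<Rightarrow> nat"
    let ?n = "x l * (x l - 1) * (x l - 1 - 1)"
    have "real (x l) \<le> real (2 + ?n)" using nat_le_cubic[of "x l"] by (simp only: of_nat_le_iff)
    also have "real (2 + ?n) = 2 + real ?n" by (simp only: of_nat_add)
    finally have "ennreal (real (x l)) \<le> ennreal (2 + real ?n)" by (rule ennreal_leI)
    also have "ennreal (2 + real ?n) = ennreal 2 + ennreal (real ?n)" by (rule ennreal_plus) auto
    finally show "of_nat (x l) \<le> 2 + ennreal (real ?n)" by (simp add: ennreal_of_nat_eq_real_of_nat)
  qed
  also have "\<dots> = 2 + deriv3 p k l l l"
    by (simp add: nn_integral_add pmf_nn_const deriv3_def)
  also have "\<dots> < \<infinity>" using d3 by (simp add: ennreal_less_top order_le_less_trans[of _ "ennreal c"])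
  finally have fin: "Nm p k l < \<infinity>" .
  have "mean_mat p k l = enn2real (\<integral>\<^sup>+ x. ennreal (real (x l)) \<partial>measure_pmf (p k))"
    unfolding mean_mat_def by (rule integral_eq_nn_integral) auto
  also have "\<dots> = enn2real (Nm p k l)" by (simp add: Nm_def ennreal_of_nat_eq_real_of_nat)
  finally show ?thesis using fin by (simp add: ennreal_enn2real_if)
qed

lemma etp_formula:
  assumes K: "classK d a b c U p" and m: "m < d" and l: "l < d"
  shows "exp_total_progeny d p m n l = (\<Sum>j\<le>n. matpow d (mean_mat p) j m l)"
proof -
  have mnn: "0 \<le> mean_mat p i j" for i j unfolding mean_mat_def by simp
  have G: "Gm d p (unitv m) j i = ennreal (matpow d (mean_mat p) j m i)" if "i < d" for j i
    using that
  proof (induction j arbitrary: i)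
    case 0
    then show ?case by (simp add: Gm_0 unitv_def)
  next
    case (Suc j)
    have "Gm d p (unitv m) (Suc j) i = (\<Sum>r<d. ennreal (matpow d (mean_mat p) j m r) * ennreal (mean_mat p r i))"
      using Suc Nm_finite[OF K _ Suc.prems] by (simp add: Gm_Suc)
    also have "\<dots> = ennreal (\<Sum>r<d. matpow d (mean_mat p) j m r * mean_mat p r i)"
    proof -
      have nnP: "0 \<le> matpow d (mean_mat p) j m r" for r by (rule matpow_nonneg[OF mnn])
      have "(\<Sum>r<d. ennreal (matpow d (mean_mat p) j m r) * ennreal (mean_mat p r i))
          = (\<Sum>r<d. ennreal (matpow d (mean_mat p) j m r * mean_mat p r i))"
        by (rule sum.cong) (simp_all add: ennreal_mult[OF nnP mnn])
      also have "\<dots> = ennreal (\<Sum>r<d. matpow d (mean_mat p) j m r * mean_mat p r i)"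
        by (rule sum_ennreal) (simp add: nnP mnn)
      finally show ?thesis .
    qed
    finally show ?case by (simp add: matmul_def)
  qed
  have "exp_total_progeny d p m n l = enn2real (\<integral>\<^sup>+ zs. ennreal (real (\<Sum>z\<leftarrow>zs. z l)) \<partial>measure_pmf (gw_path d p (unitv m) n))"
    unfolding exp_total_progeny_def by (rule integral_eq_nn_integral) auto
  also have "\<dots> = enn2real (\<Sum>j\<le>n. Gm d p (unitv m) j l)"
    using total_mean[of d p "unitv m" n l] by (simp add: ennreal_of_nat_eq_real_of_nat)
  also have "\<dots> = enn2real (\<Sum>j\<le>n. ennreal (matpow d (mean_mat p) j m l))" using G[OF l] by simp
  also have "\<dots> = (\<Sum>j\<le>n. matpow d (mean_mat p) j m l)"
    using matpow_nonneg mnn by (simp add: sum_ennreal sum_nonneg)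
  finally show ?thesis .
qed



lemma per_k:
  fixes d U :: nat and a b c \<rho> :: real and p and u v :: "nat \<Rightarrow> real"
  assumes d: "d \<ge> 1" and U: "U \<ge> 1" and a: "a > 0" and K: "classK d a b c U p"
    and rdef: "\<rho> = perron_root d (mean_mat p)" and r0: "\<rho> > 0" and r2: "\<rho> \<le> 2"
    and ueig: "\<And>i. i < d \<Longrightarrow> (\<Sum>j<d. mean_mat p i j * u j) = \<rho> * u i"
    and veig: "\<And>j. j < d \<Longrightarrow> (\<Sum>i<d. v i * mean_mat p i j) = \<rho> * v j"
    and usum: "(\<Sum>i<d. u i) = 1" and uv: "(\<Sum>i<d. u i * v i) = 1"
    and m: "m < d" and l: "l < d"
  shows "a / 2 ^ U \<le> 1 \<and> u m \<ge> a / 2 ^ U \<and> v l \<ge> a / 2 ^ U \<and>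
    (\<forall>j. \<bar>matpow d (mean_mat p) j m l - \<rho> ^ j * (u m * v l)\<bar> \<le> \<rho> ^ j * (1 - a / 2 ^ U) ^ (j div U) * (2 ^ U / a))"
proof -
  define M where "M = mean_mat p"
  have nn: "0 \<le> M i j" for i j unfolding M_def mean_mat_def by simp
  have pos: "matpow d M U i j \<ge> a" if "i < d" "j < d" for i j
    using K that by (simp add: classK_def M_def)
  have mx: "cmod mu \<le> \<rho>" if "is_eigenvalue d M mu" for mu
    using perron_root_ge[of d M mu] that d by (simp add: rdef M_def)
  have pv: "(\<forall>i<d. u i > 0) \<and> (\<forall>i<d. v i > 0)"
    by (rule perron_pos[OF d U r0 nn pos a mx]) (use ueig veig usum uv in \<open>simp_all add: M_def\<close>)
  hence upos: "\<And>i. i < d \<Longrightarrow> u i > 0" and vpos: "\<And>i. i < d \<Longrightarrow> v i > 0" by auto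
  define A where "A = (\<lambda>i j. (1 / \<rho>) * M i j)"
  define \<alpha> where "\<alpha> = a / \<rho> ^ U"
  define \<alpha>0 where "\<alpha>0 = a / 2 ^ U"
  have Ann: "0 \<le> A i j" for i j using nn r0 by (simp add: A_def)
  have Aeig: "matvec d A u i = u i" if "i < d" for i
  proof -
    have "matvec d A u i = (1 / \<rho>) * (\<Sum>j<d. M i j * u j)"
      by (simp add: matvec_def A_def sum_distrib_left mult_ac)
    then show ?thesis using ueig[OF that] r0 by (simp add: M_def)
  qed
  have Aveig: "vecmat d v A j = v j" if "j < d" for j
  proof -
    have "vecmat d v A j = (1 / \<rho>) * (\<Sum>i<d. v i * M i j)"
      by (simp add: vecmat_def A_def sum_distrib_left mult_ac)
    then show ?thesis using veig[OF that] r0 by (simp add: M_def)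
  qed
  have Apow: "matpow d A j i k = (1 / \<rho>) ^ j * matpow d M j i k" for j i k
    unfolding A_def by (rule matpow_scale)
  have Aalpha: "matpow d A U i j \<ge> \<alpha>" if "i < d" "j < d" for i j
  proof -
    have "(1 / \<rho>) ^ U * a \<le> (1 / \<rho>) ^ U * matpow d M U i j"
      using pos[OF that] r0 by (simp add: mult_left_mono)
    then show ?thesis by (simp add: Apow \<alpha>_def power_one_over divide_inverse mult.commute power_inverse)
  qed
  have a00: "\<alpha> \<ge> 0" using a r0 by (simp add: \<alpha>_def)
  have aa0: "\<alpha>0 \<le> \<alpha>"
  proof -
    have "\<rho> ^ U \<le> 2 ^ U" using r0 r2 by (simp add: power_mono)
    then show ?thesis unfolding \<alpha>_def \<alpha>0_def using a r0 by (simp add: frac_le)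
  qed
  have ule1: "u i \<le> 1" if "i < d" for i
  proof -
    have "u i \<le> (\<Sum>i<d. u i)" by (rule member_le_sum) (use that upos in \<open>auto intro: less_imp_le\<close>)
    then show ?thesis using usum by simp
  qed
  have ulow: "u i \<ge> \<alpha>" if i: "i < d" for i
  proof -
    have "(\<Sum>j<d. \<alpha> * u j) \<le> (\<Sum>j<d. matpow d A U i j * u j)"
      by (rule sum_mono) (use Aalpha i upos in \<open>auto intro: mult_right_mono less_imp_le\<close>)
    also have "\<dots> = matvec d (matpow d A U) u i" by (simp add: matvec_def)
    also have "\<dots> = 1 ^ U * u i" by (rule matvec_eig_pow) (use Aeig i in auto)
    finally show ?thesis using usum by (simp add: sum_distrib_left[symmetric])
  qed
  have vsum: "(\<Sum>i<d. v i) \<ge> 1"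
  proof -
    have "(\<Sum>i<d. u i * v i) \<le> (\<Sum>i<d. v i)"
    proof (rule sum_mono)
      fix i assume "i \<in> {..<d}" hence i: "i < d" by simp
      have "u i * v i \<le> 1 * v i" using ule1[OF i] vpos[OF i] by (intro mult_right_mono) auto
      then show "u i * v i \<le> v i" by simp
    qed
    then show ?thesis using uv by simp
  qed
  have vlow: "v j \<ge> \<alpha>" if j: "j < d" for j
  proof -
    have "(\<Sum>i<d. \<alpha> * v i) \<le> (\<Sum>i<d. v i * matpow d A U i j)"
    proof (rule sum_mono)
      fix i assume "i \<in> {..<d}" hence i: "i < d" by simp
      have "\<alpha> * v i \<le> matpow d A U i j * v i"
        using Aalpha[OF i j] vpos[OF i] by (intro mult_right_mono) auto
      then show "\<alpha> * v i \<le> v i * matpow d A U i j" by (simp add: mult.commute)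
    qed
    also have "\<dots> = vecmat d v (matpow d A U) j" by (simp add: vecmat_def)
    also have "\<dots> = 1 ^ U * v j" by (rule vecmat_eig_pow) (use Aveig j in auto)
    finally have "\<alpha> * (\<Sum>i<d. v i) \<le> v j" by (simp add: sum_distrib_left)
    moreover have "\<alpha> \<le> \<alpha> * (\<Sum>i<d. v i)" using vsum a00 mult_left_mono[OF vsum a00] by simp
    ultimately show ?thesis by simp
  qed
  have al1: "\<alpha> \<le> 1" using ulow[OF m] ule1[OF m] by simp
  have bound: "\<bar>matpow d M j m l - \<rho> ^ j * (u m * v l)\<bar> \<le> \<rho> ^ j * (1 - \<alpha>0) ^ (j div U) * (2 ^ U / a)" for j
  proof -
    have D: "\<bar>matpow d A j m l - u m * v l\<bar> \<le> (1 - \<alpha>) ^ (j div U) / u l"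
      by (rule doeblin[OF Ann Aeig Aveig upos _ usum uv U Aalpha a00 m l]) (use vpos in \<open>auto intro: less_imp_le\<close>)
    have "matpow d M j m l - \<rho> ^ j * (u m * v l) = \<rho> ^ j * (matpow d A j m l - u m * v l)"
      using r0 by (simp add: Apow right_diff_distrib power_one_over)
    hence "\<bar>matpow d M j m l - \<rho> ^ j * (u m * v l)\<bar> = \<rho> ^ j * \<bar>matpow d A j m l - u m * v l\<bar>"
      using r0 by (simp add: abs_mult)
    also have "\<dots> \<le> \<rho> ^ j * ((1 - \<alpha>) ^ (j div U) / u l)"
      using mult_left_mono[OF D, of "\<rho> ^ j"] r0 by simp
    also have "(1 - \<alpha>) ^ (j div U) / u l \<le> (1 - \<alpha>0) ^ (j div U) * (2 ^ U / a)"
    proof -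
      have "(1 - \<alpha>) ^ (j div U) \<le> (1 - \<alpha>0) ^ (j div U)"
        by (rule power_mono) (use aa0 al1 in auto)
      moreover have "1 / u l \<le> 2 ^ U / a"
      proof -
        have "\<alpha>0 \<le> u l" using aa0 ulow[OF l] by simp
        moreover have "\<alpha>0 > 0" using a by (simp add: \<alpha>0_def)
        ultimately have "1 / u l \<le> 1 / \<alpha>0" by (simp add: frac_le)
        then show ?thesis by (simp add: \<alpha>0_def)
      qed
      moreover have "0 \<le> (1 - \<alpha>) ^ (j div U)" using al1 by simp
      moreover have "0 \<le> 1 / u l" using upos[OF l] by simp
      ultimately have "(1 - \<alpha>) ^ (j div U) * (1 / u l) \<le> (1 - \<alpha>0) ^ (j div U) * (2 ^ U / a)"
        by (rule mult_mono') 
      then show ?thesis by simp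
    qed
    hence "\<rho> ^ j * ((1 - \<alpha>) ^ (j div U) / u l) \<le> \<rho> ^ j * ((1 - \<alpha>0) ^ (j div U) * (2 ^ U / a))"
      by (rule mult_left_mono) (use r0 in simp)
    finally show ?thesis by (simp add: mult.assoc)
  qed
  have "\<alpha>0 \<le> 1" using aa0 al1 by linarith
  hence "a \<le> 2 ^ U" by (simp add: \<alpha>0_def)
  then show ?thesis using bound ulow[OF m] vlow[OF l] aa0 al1 unfolding \<alpha>0_def M_def by auto
qed



lemma S_to_top:
  fixes r :: "nat \<Rightarrow> real" and nn :: "nat \<Rightarrow> nat"
  assumes nn: "filterlim nn at_top sequentially" and r: "r \<longlonglongrightarrow> 1"
  shows "filterlim (\<lambda>k. \<Sum>j\<le>nn k. r k ^ j) at_top sequentially"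
  unfolding filterlim_at_top
proof
  fix Z :: real
  define N where "N = nat \<lceil>2 * Z\<rceil>"
  have ev1: "eventually (\<lambda>k. N \<le> nn k) sequentially"
    using nn unfolding filterlim_at_top by blast
  have "(\<lambda>k. r k ^ N) \<longlonglongrightarrow> 1 ^ N" by (intro tendsto_intros r)
  hence ev2: "eventually (\<lambda>k. r k ^ N > 1/2) sequentially"
    using order_tendstoD(1)[of "\<lambda>k. r k ^ N" 1 sequentially "1/2"] by simp
  have ev3: "eventually (\<lambda>k. r k > 0) sequentially"
    using order_tendstoD(1)[OF r, of 0] by simp
  show "eventually (\<lambda>k. Z \<le> (\<Sum>j\<le>nn k. r k ^ j)) sequentially"
    using ev1 ev2 ev3
  proof eventually_elim
    case (elim k)
    have t: "r k ^ j \<ge> 1/2" if "j \<le> N" for j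
    proof (cases "r k \<ge> 1")
      case True
      then have "r k ^ j \<ge> 1" by (rule one_le_power)
      then show ?thesis by simp
    next
      case False
      then have "r k ^ N \<le> r k ^ j" using elim that by (intro power_decreasing) auto
      then show ?thesis using elim by simp
    qed
    have "2 * Z \<le> real N" unfolding N_def by (rule real_nat_ceiling_ge)
    hence "Z \<le> real (N + 1) / 2" by simp
    also have "\<dots> = (\<Sum>j\<le>N. (1/2::real))" by simp
    also have "\<dots> \<le> (\<Sum>j\<le>N. r k ^ j)" by (rule sum_mono) (use t in auto)
    also have "\<dots> \<le> (\<Sum>j\<le>nn k. r k ^ j)"
      by (rule sum_mono2) (use elim in auto)
    finally show ?case .
  qed
qed

theorem lemma15:
  fixes d U :: nat and a b c :: real
    and nn :: "nat \<Rightarrow> nat"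
    and f :: "nat \<Rightarrow> nat \<Rightarrow> (nat \<Rightarrow> nat) pmf"
    and u v :: "nat \<Rightarrow> nat \<Rightarrow> real"
  assumes "d \<ge> 1" and "a > 0" and "b > 0" and "c > 0" and "U \<ge> 1"
    and "filterlim nn at_top sequentially"
    and "\<And>k. classK d a b c U (f k)"
    and "(\<lambda>k. perron_root d (mean_mat (f k))) \<longlonglongrightarrow> 1"
    and "\<And>k. perron_root d (mean_mat (f k)) \<noteq> 1"
    and "\<And>k i. i < d \<Longrightarrow> (\<Sum>j<d. mean_mat (f k) i j * u k j) = perron_root d (mean_mat (f k)) * u k i"
    and "\<And>k j. j < d \<Longrightarrow> (\<Sum>i<d. v k i * mean_mat (f k) i j) = perron_root d (mean_mat (f k)) * v k j"
    and "\<And>k. (\<Sum>i<d. u k i) = 1"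
    and "\<And>k. (\<Sum>i<d. u k i * v k i) = 1"
    and "m < d" and "l < d"
  shows "(\<lambda>k. exp_total_progeny d (f k) m (nn k) l /
            ((1 - perron_root d (mean_mat (f k)) ^ (nn k + 1)) / (1 - perron_root d (mean_mat (f k)))
              * u k m * v k l)) \<longlonglongrightarrow> 1"
proof -
  note d = assms(1) and a = assms(2) and U = assms(5) and nnlim = assms(6) and K = assms(7)
    and rlim = assms(8) and rne = assms(9) and ueig = assms(10) and veig = assms(11)
    and usum = assms(12) and uv = assms(13) and m = assms(14) and l = assms(15)
  define r where "r k = perron_root d (mean_mat (f k))" for k
  define \<alpha>0 where "\<alpha>0 = a / 2 ^ U"
  define \<theta>0 where "\<theta>0 = 1 - \<alpha>0"
  define C0 where "C0 = 2 ^ U / a"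
  define \<theta>1 where "\<theta>1 = 1 - \<alpha>0 / 2"
  define \<beta> where "\<beta> = root U \<theta>1"
  define \<gamma> where "\<gamma> = (1 + \<beta>) / 2"
  define rhi where "rhi = min 2 (\<gamma> / \<beta>)"
  have rl: "r \<longlonglongrightarrow> 1" using rlim by (simp add: r_def[abs_def])
  have a0pos: "\<alpha>0 > 0" using a by (simp add: \<alpha>0_def)
  have C0pos: "C0 > 0" using a by (simp add: C0_def)
  have evr: "eventually (\<lambda>k. 1/2 < r k) sequentially" using order_tendstoD(1)[OF rl, of "1/2"] by simp
  have evr2: "eventually (\<lambda>k. r k < 2) sequentially" using order_tendstoD(2)[OF rl, of 2] by simp
  have PK: "a / 2 ^ U \<le> 1 \<and> u k m \<ge> a / 2 ^ U \<and> v k l \<ge> a / 2 ^ U \<and>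
    (\<forall>j. \<bar>matpow d (mean_mat (f k)) j m l - r k ^ j * (u k m * v k l)\<bar> \<le> r k ^ j * (1 - a / 2 ^ U) ^ (j div U) * (2 ^ U / a))"
    if "1/2 < r k" "r k < 2" for k
    by (rule per_k[OF d U a K]) (use that ueig veig usum uv m l in \<open>simp_all add: r_def\<close>)
  have a01: "\<alpha>0 \<le> 1"
  proof -
    from evr evr2 have "eventually (\<lambda>k. 1/2 < r k \<and> r k < 2) sequentially" by (rule eventually_conj)
    then obtain k where "1/2 < r k" "r k < 2" by (auto simp: eventually_sequentially)
    from PK[OF this] show ?thesis by (simp add: \<alpha>0_def)
  qed
  have th1: "0 < \<theta>1" "\<theta>1 < 1" using a0pos a01 by (auto simp: \<theta>1_def)
  have th01: "0 \<le> \<theta>0" "\<theta>0 \<le> \<theta>1" using a0pos a01 by (auto simp: \<theta>0_def \<theta>1_def)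
  have Upos: "U > 0" using U by simp
  have bpos: "0 < \<beta>" using th1 Upos by (simp add: \<beta>_def)
  have blt1: "\<beta> < 1" using th1 Upos by (simp add: \<beta>_def)
  have bU: "\<beta> ^ U = \<theta>1" using th1 Upos by (simp add: \<beta>_def)
  have g: "\<beta> < \<gamma>" "\<gamma> < 1" using blt1 by (auto simp: \<gamma>_def)
  have rhi1: "rhi > 1" using g bpos by (auto simp: rhi_def field_simps)
  have evr3: "eventually (\<lambda>k. r k < rhi) sequentially" using order_tendstoD(2)[OF rl rhi1] by simp
  have termb: "\<theta>0 ^ (j div U) \<le> \<beta> ^ j / \<theta>1" for j
  proof -
    have "\<theta>0 ^ (j div U) \<le> \<theta>1 ^ (j div U)" by (rule power_mono) (use th01 in auto)
    moreover have "\<theta>1 ^ (j div U) * \<theta>1 \<le> \<beta> ^ j"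
    proof -
      have "\<beta> ^ j = \<beta> ^ (U * (j div U) + j mod U)" by simp
      also have "\<dots> = \<theta>1 ^ (j div U) * \<beta> ^ (j mod U)" by (simp only: power_add power_mult bU)
      finally have e: "\<beta> ^ j = \<theta>1 ^ (j div U) * \<beta> ^ (j mod U)" .
      have "\<beta> ^ U \<le> \<beta> ^ (j mod U)"
        by (rule power_decreasing) (use bpos blt1 Upos in \<open>auto intro: less_imp_le\<close>)
      hence "\<theta>1 \<le> \<beta> ^ (j mod U)" using bU by simp
      hence "\<theta>1 ^ (j div U) * \<theta>1 \<le> \<theta>1 ^ (j div U) * \<beta> ^ (j mod U)"
        by (rule mult_left_mono) (use th1 in simp)
      then show ?thesis using e by simp
    qed
    ultimately have "\<theta>1 * \<theta>0 ^ (j div U) \<le> \<beta> ^ j"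
    proof -
      assume h1: "\<theta>0 ^ (j div U) \<le> \<theta>1 ^ (j div U)" and h2: "\<theta>1 ^ (j div U) * \<theta>1 \<le> \<beta> ^ j"
      have "\<theta>1 * \<theta>0 ^ (j div U) \<le> \<theta>1 * \<theta>1 ^ (j div U)"
        by (rule mult_left_mono[OF h1]) (use th1 in simp)
      also have "\<dots> \<le> \<beta> ^ j" using h2 by (simp add: mult.commute)
      finally show ?thesis .
    qed
    then show ?thesis using th1 by (simp add: field_simps)
  qed
  define Kc where "Kc = C0 / (\<theta>1 * (1 - \<gamma>))"
  have main: "\<bar>exp_total_progeny d (f k) m (nn k) l / ((\<Sum>j\<le>nn k. r k ^ j) * u k m * v k l) - 1\<bar>
      \<le> (Kc / \<alpha>0 ^ 2) * inverse (\<Sum>j\<le>nn k. r k ^ j)"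
    if k1: "1/2 < r k" and k2: "r k < 2" and k3: "r k < rhi" for k
  proof -
    define S where "S = (\<Sum>j\<le>nn k. r k ^ j)"
    define E where "E = exp_total_progeny d (f k) m (nn k) l"
    from PK[OF k1 k2] have um: "u k m \<ge> \<alpha>0" and vl: "v k l \<ge> \<alpha>0"
      and bd: "\<And>j. \<bar>matpow d (mean_mat (f k)) j m l - r k ^ j * (u k m * v k l)\<bar> \<le> r k ^ j * \<theta>0 ^ (j div U) * C0"
      by (auto simp: \<alpha>0_def \<theta>0_def C0_def)
    have rpos: "r k > 0" using k1 by simp
    have Spos: "S \<ge> 1" unfolding S_def
    proof -
      have "(\<Sum>j\<le>0. r k ^ j) \<le> (\<Sum>j\<le>nn k. r k ^ j)"
        by (rule sum_mono2) (use rpos in auto)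
      then show "1 \<le> (\<Sum>j\<le>nn k. r k ^ j)" by simp
    qed
    have rb: "r k * \<beta> \<le> \<gamma>"
    proof -
      have "r k < \<gamma> / \<beta>" using k3 by (simp add: rhi_def)
      then show ?thesis using bpos by (simp add: field_simps)
    qed
    have E: "E = (\<Sum>j\<le>nn k. matpow d (mean_mat (f k)) j m l)"
      unfolding E_def by (rule etp_formula[OF K m l])
    have "\<bar>E - S * (u k m * v k l)\<bar> = \<bar>\<Sum>j\<le>nn k. matpow d (mean_mat (f k)) j m l - r k ^ j * (u k m * v k l)\<bar>"
      by (simp add: E S_def sum_subtractf sum_distrib_right)
    also have "\<dots> \<le> (\<Sum>j\<le>nn k. \<bar>matpow d (mean_mat (f k)) j m l - r k ^ j * (u k m * v k l)\<bar>)"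
      by (rule sum_abs)
    also have "\<dots> \<le> (\<Sum>j\<le>nn k. (C0 / \<theta>1) * \<gamma> ^ j)"
    proof (rule sum_mono)
      fix j
      have "r k ^ j * \<theta>0 ^ (j div U) \<le> r k ^ j * (\<beta> ^ j / \<theta>1)"
        by (rule mult_left_mono[OF termb]) (use rpos in simp)
      also have "\<dots> = (r k * \<beta>) ^ j / \<theta>1" by (simp add: power_mult_distrib)
      also have "\<dots> \<le> \<gamma> ^ j / \<theta>1"
        by (rule divide_right_mono[OF power_mono[OF rb]]) (use rpos bpos th1 in auto)
      finally have "r k ^ j * \<theta>0 ^ (j div U) * C0 \<le> \<gamma> ^ j / \<theta>1 * C0"
        by (rule mult_right_mono) (use C0pos in simp)
      then show "\<bar>matpow d (mean_mat (f k)) j m l - r k ^ j * (u k m * v k l)\<bar> \<le> (C0 / \<theta>1) * \<gamma> ^ j"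
      proof -
        have "\<gamma> ^ j / \<theta>1 * C0 = (C0 / \<theta>1) * \<gamma> ^ j" by simp
        with bd[of j] \<open>r k ^ j * \<theta>0 ^ (j div U) * C0 \<le> \<gamma> ^ j / \<theta>1 * C0\<close> show ?thesis by linarith
      qed
    qed
    also have "\<dots> = (C0 / \<theta>1) * (\<Sum>j\<le>nn k. \<gamma> ^ j)" by (simp add: sum_distrib_left)
    also have "\<dots> \<le> (C0 / \<theta>1) * (1 / (1 - \<gamma>))"
    proof (rule mult_left_mono)
      have "(\<Sum>j\<le>nn k. \<gamma> ^ j) = (1 - \<gamma> ^ Suc (nn k)) / (1 - \<gamma>)"
        using g by (simp add: sum_gp0)
      also have "\<dots> \<le> 1 / (1 - \<gamma>)"
        using g bpos by (intro divide_right_mono) auto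
      finally show "(\<Sum>j\<le>nn k. \<gamma> ^ j) \<le> 1 / (1 - \<gamma>)" .
    qed (use C0pos th1 in simp)
    also have "\<dots> = Kc" by (simp add: Kc_def)
    finally have errb: "\<bar>E - S * (u k m * v k l)\<bar> \<le> Kc" .
    have Dlow: "S * \<alpha>0 ^ 2 \<le> S * (u k m * v k l)"
    proof -
      have "\<alpha>0 * \<alpha>0 \<le> u k m * v k l" using um vl a0pos by (intro mult_mono) auto
      then show ?thesis using Spos by (simp add: power2_eq_square)
    qed
    have Dpos: "S * \<alpha>0 ^ 2 > 0" using Spos a0pos by simp
    have "\<bar>E / (S * u k m * v k l) - 1\<bar> = \<bar>E - S * (u k m * v k l)\<bar> / (S * (u k m * v k l))"
    proof -
      have Dp: "S * (u k m * v k l) > 0" using Dlow Dpos by linarith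
      have "E / (S * u k m * v k l) - 1 = (E - S * (u k m * v k l)) / (S * (u k m * v k l))"
      proof -
        have "S * u k m * v k l = S * (u k m * v k l)" by (simp add: mult.assoc)
        moreover have "E / (S * (u k m * v k l)) - 1 = (E - S * (u k m * v k l)) / (S * (u k m * v k l))"
        proof -
          have "S \<noteq> 0" "u k m \<noteq> 0" "v k l \<noteq> 0" using Spos um vl a0pos by auto
          then show ?thesis by (simp add: diff_divide_distrib)
        qed
        ultimately show ?thesis by simp
      qed
      then show ?thesis using Dp by (simp add: abs_divide)
    qed
    also have "\<dots> \<le> Kc / (S * \<alpha>0 ^ 2)"
    proof (rule frac_le)
      show "0 \<le> Kc" using errb by linarith
    qed (use errb Dlow Dpos in auto)
    also have "\<dots> = (Kc / \<alpha>0 ^ 2) * inverse S" by (simp add: field_simps)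
    finally show ?thesis by (simp add: E_def S_def mult.assoc)
  qed
  have ev: "eventually (\<lambda>k. norm (exp_total_progeny d (f k) m (nn k) l / ((\<Sum>j\<le>nn k. r k ^ j) * u k m * v k l) - 1)
      \<le> (Kc / \<alpha>0 ^ 2) * inverse (\<Sum>j\<le>nn k. r k ^ j)) sequentially"
    using evr evr2 evr3 by eventually_elim (use main in simp)
  have "(\<lambda>k. (Kc / \<alpha>0 ^ 2) * inverse (\<Sum>j\<le>nn k. r k ^ j)) \<longlonglongrightarrow> (Kc / \<alpha>0 ^ 2) * 0"
    by (intro tendsto_mult tendsto_const tendsto_inverse_0_at_top S_to_top[OF nnlim rl])
  hence "(\<lambda>k. exp_total_progeny d (f k) m (nn k) l / ((\<Sum>j\<le>nn k. r k ^ j) * u k m * v k l) - 1) \<longlonglongrightarrow> 0"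
    using Lim_null_comparison[OF ev] by simp
  hence lim: "(\<lambda>k. exp_total_progeny d (f k) m (nn k) l / ((\<Sum>j\<le>nn k. r k ^ j) * u k m * v k l)) \<longlonglongrightarrow> 1"
    by (rule LIM_zero_cancel)
  have "(\<Sum>j\<le>nn k. r k ^ j) = (1 - r k ^ (nn k + 1)) / (1 - r k)" for k
    using rne[of k] by (simp add: sum_gp0 r_def)
  then show ?thesis using lim by (simp add: r_def)
qed


end
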